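(* Fix $q\in[0,1]$, $p\in(0,1)\setminus\{1/2\}$, an integer $k\geq 1$ and a function $f:[0,1]\to[0,1]$, and let $\{S_n\}$ be the elephant random walk with $k$ extractions with replacement described in the context. Define $g(x)=pf(x)+(1-p)\{1-f(x)\}$ for $x\in[0,1]$ and $$H(x)=2^{1-k}\sum_{i=0}^{k} g\!\left(\tfrac{i}{k}\right)\binom{k}{i}(1+x)^{i}(1-x)^{k-i}-1,\qquad x\in[-1,1].$$ Suppose that either (A1) $p>1/2$ and $f(1)<p/(2p-1)$, or (A2) $p<1/2$ and $f(0)<(1-p)/(1-2p)$. If $H$ has a unique fixed point $x^*$ in $[-1,1]$, then $S_n/n\to x^*$ almost surely. In particular, if (A1) or (A2) holds and $H$ satisfies one of: (B1) $H$ is strictly decreasing throughout $(-1,1)$; (B2) $H$ is strictly convex throughout $(-1,1)$ or strictly concave throughout $(-1,1)$; (B3) $H$ is a contraction on $(-1,1)$; then $H$ has a unique fixed point $x^*\in(-1,1)$ and $S_n/n\to x^*$ almost surely.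
   Context: The model: set $X_0=S_0=0$ and let $X_1\in\{\pm1\}$ with $P(X_1=1)=q$. Let $\mathcal{F}_n$ be the $\sigma$-field of all information of the process up to time $n$. For each $n\geq1$, draw $U_{n,1},\dots,U_{n,k}$ i.i.d. uniform on $\{1,\dots,n\}$ (independently of the past), set $C_n^+=\sum_{i=1}^k\chi\{X_{U_{n,i}}=1\}$, and, conditionally on $\mathcal{F}_n$ and the $U_{n,i}$, let $X_{n+1}=1$ with probability $pf(C_n^+/k)+(1-p)\{1-f(C_n^+/k)\}$ and $X_{n+1}=-1$ otherwise. Set $S_n=\sum_{i=1}^n X_i$. The sample size $k$ does not depend on $n$. *)

theory Defs
  imports "HOL-Probability.Probability"
begin

definition erw_g :: "real \<Rightarrow> (real \<Rightarrow> real) \<Rightarrow> real \<Rightarrow> real" where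
  "erw_g p f x = p * f x + (1 - p) * (1 - f x)"

definition erw_H :: "real \<Rightarrow> (real \<Rightarrow> real) \<Rightarrow> nat \<Rightarrow> real \<Rightarrow> real" where
  "erw_H p f k x =
     2 powr (1 - real k) *
       (\<Sum>i = 0..k. erw_g p f (real i / real k) * real (k choose i)
                      * (1 + x) ^ i * (1 - x) ^ (k - i)) - 1"

text \<open>Probability of the next step given the sampled memories: the value y of
  X_{m+1} given that C of the k sampled steps were +1.\<close>
definition erw_step_prob :: "real \<Rightarrow> (real \<Rightarrow> real) \<Rightarrow> nat \<Rightarrow> nat \<Rightarrow> real \<Rightarrow> real" where
  "erw_step_prob p f k C y =
     (if y = 1 then erw_g p f (real C / real k) else 1 - erw_g p f (real C / real k))"

text \<open>X m is the step at time m (m \<ge> 1); U m i (i < k) is the i-th index drawn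
  at time m, uniform on {1..m}.  The law of the process is specified through its
  finite-dimensional distributions: the probability of any admissible history
  (X_1,...,X_n, U_1,...,U_{n-1}) is P(X_1 = x_1) times the product over m of
  (1/m)^k (i.i.d. uniform draws, independent of the past) times the conditional
  probability of X_{m+1} given the past and the draws.\<close>
definition erw_process ::
  "'a measure \<Rightarrow> real \<Rightarrow> real \<Rightarrow> (real \<Rightarrow> real) \<Rightarrow> nat \<Rightarrow>
     (nat \<Rightarrow> 'a \<Rightarrow> real) \<Rightarrow> (nat \<Rightarrow> nat \<Rightarrow> 'a \<Rightarrow> nat) \<Rightarrow> bool" where
  "erw_process M q p f k X U \<longleftrightarrow>
     (\<forall>m. X m \<in> measurable M (count_space UNIV)) \<and>
     (\<forall>m i. U m i \<in> measurable M (count_space UNIV)) \<and>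
     (\<forall>n \<ge> 1. \<forall>x :: nat \<Rightarrow> real. \<forall>u :: nat \<Rightarrow> nat \<Rightarrow> nat.
        (\<forall>m \<in> {1..n}. x m \<in> {-1, 1}) \<longrightarrow>
        (\<forall>m \<in> {1..<n}. \<forall>i < k. u m i \<in> {1..m}) \<longrightarrow>
        measure M {\<omega> \<in> space M. (\<forall>m \<in> {1..n}. X m \<omega> = x m) \<and>
                                 (\<forall>m \<in> {1..<n}. \<forall>i < k. U m i \<omega> = u m i)}
        = (if x 1 = 1 then q else 1 - q) *
          (\<Prod>m \<in> {1..<n}. (1 / real m) ^ k *
              erw_step_prob p f k (card {i. i < k \<and> x (u m i) = 1}) (x (Suc m))))"

definition erw_S :: "(nat \<Rightarrow> 'a \<Rightarrow> real) \<Rightarrow> nat \<Rightarrow> 'a \<Rightarrow> real" where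
  "erw_S X n \<omega> = (\<Sum>i = 1..n. X i \<omega>)"

definition strictly_convex_on :: "real set \<Rightarrow> (real \<Rightarrow> real) \<Rightarrow> bool" where
  "strictly_convex_on S h \<longleftrightarrow>
     (\<forall>x \<in> S. \<forall>y \<in> S. x \<noteq> y \<longrightarrow> (\<forall>t. 0 < t \<and> t < 1 \<longrightarrow>
        h ((1 - t) * x + t * y) < (1 - t) * h x + t * h y))"

definition strictly_concave_on :: "real set \<Rightarrow> (real \<Rightarrow> real) \<Rightarrow> bool" where
  "strictly_concave_on S h \<longleftrightarrow> strictly_convex_on S (\<lambda>x. - h x)"

end

theory Submission
  imports Defs
begin

lemma g_bounds:
  assumes "0 < p" "p < 1" "f x \<in> {0..1}"
  shows "0 < erw_g p f x" "erw_g p f x < 1"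
proof -
  have f: "0 \<le> f x" "0 \<le> 1 - f x" using assms(3) by auto
  have "p * f x + (1 - p) * (1 - f x) \<ge> min p (1-p) * f x + min p (1-p) * (1 - f x)"
    using f by (intro add_mono mult_right_mono) auto
  moreover have "min p (1-p) * f x + min p (1-p) * (1 - f x) = min p (1-p)" by (simp add: algebra_simps)
  moreover have "min p (1-p) > 0" using assms by auto
  ultimately show "0 < erw_g p f x" unfolding erw_g_def by linarith
  have "p * f x + (1 - p) * (1 - f x) \<le> max p (1-p) * f x + max p (1-p) * (1 - f x)"
    using f by (intro add_mono mult_right_mono) auto
  moreover have "max p (1-p) * f x + max p (1-p) * (1 - f x) = max p (1-p)" by (simp add: algebra_simps)
  moreover have "max p (1-p) < 1" using assms by auto
  ultimately show "erw_g p f x < 1" unfolding erw_g_def by linarith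
qed

lemma H_alt:
  "erw_H p f k y = 2 * (\<Sum>i=0..k. erw_g p f (real i / real k) * real (k choose i)
      * ((1+y)/2)^i * ((1-y)/2)^(k-i)) - 1"
proof -
  have e: "2 powr (1 - real k) = 2 / 2^k"
    by (simp add: powr_diff powr_realpow)
  have "((1+y)/2)^i * ((1-y)/2)^(k-i) = (1+y)^i * (1-y)^(k-i) / 2^k" if "i \<in> {0..k}" for i
  proof -
    have "(2::real)^i * 2^(k-i) = 2^k" using that by (simp add: power_add[symmetric])
    then show ?thesis by (simp add: power_divide field_simps)
  qed
  then have "(\<Sum>i=0..k. erw_g p f (real i / real k) * real (k choose i)
      * ((1+y)/2)^i * ((1-y)/2)^(k-i)) = (\<Sum>i=0..k. erw_g p f (real i / real k) * real (k choose i)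
      * (1+y)^i * (1-y)^(k-i)) / 2^k"
    by (simp add: sum_divide_distrib mult.assoc)
  then show ?thesis unfolding erw_H_def e by simp
qed

lemma binom_one: "(\<Sum>i=0..k. real (k choose i) * a^i * (1-a)^(k-i)) = 1"
  using binomial_ring[of a "1-a" k] by (simp add: atLeast0AtMost)

lemma H_bound:
  assumes "0 < p" "p < 1" "\<forall>x \<in> {0..1}. f x \<in> {0..1}" "y \<in> {-1..1}"
  shows "-1 \<le> erw_H p f k y \<and> erw_H p f k y \<le> 1"
proof -
  let ?a = "(1+y)/2"
  have a: "0 \<le> ?a" "?a \<le> 1" "1 - ?a = (1-y)/2" using assms(4) by (auto simp: field_simps)
  have g: "0 \<le> erw_g p f (real i / real k)" "erw_g p f (real i / real k) \<le> 1" if "i \<in> {0..k}" for i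
  proof -
    have "real i / real k \<in> {0..1}" using that by (cases "k = 0") auto
    then show "0 \<le> erw_g p f (real i / real k)" "erw_g p f (real i / real k) \<le> 1"
      using g_bounds[OF assms(1,2)] assms(3) by (meson less_eq_real_def)+
  qed
  let ?w = "\<lambda>i. real (k choose i) * ?a^i * (1-?a)^(k-i)"
  have w: "?w i \<ge> 0" for i using a by auto
  have s: "(\<Sum>i=0..k. ?w i) = 1" by (rule binom_one)
  have eq: "erw_H p f k y = 2 * (\<Sum>i=0..k. erw_g p f (real i / real k) * ?w i) - 1"
    unfolding H_alt a(3)[symmetric] by (simp add: mult.assoc)
  have "(\<Sum>i=0..k. erw_g p f (real i / real k) * ?w i) \<ge> 0"
    using g w by (intro sum_nonneg) auto
  moreover have "(\<Sum>i=0..k. erw_g p f (real i / real k) * ?w i) \<le> (\<Sum>i=0..k. ?w i)"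
    using g w by (intro sum_mono) (simp add: mult_left_le_one_le)
  ultimately show ?thesis using eq s by linarith
qed

lemma H_one: assumes "k \<ge> 1" shows "erw_H p f k 1 = 2 * erw_g p f 1 - 1"
proof -
  have "(\<Sum>i=0..k. erw_g p f (real i / real k) * real (k choose i)
      * ((1+1::real)/2)^i * ((1-1)/2)^(k-i)) = erw_g p f 1"
  proof -
    have "(\<Sum>i=0..k. erw_g p f (real i / real k) * real (k choose i)
      * ((1+1::real)/2)^i * ((1-1)/2)^(k-i)) = (\<Sum>i\<in>{k}. erw_g p f (real i / real k) * real (k choose i)
      * ((1+1::real)/2)^i * ((1-1)/2)^(k-i))"
      by (intro sum.mono_neutral_right) auto
    then show ?thesis using assms by simp
  qed
  then show ?thesis unfolding H_alt by simp
qed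

lemma H_mone: "erw_H p f k (-1) = 2 * erw_g p f 0 - 1"
proof -
  have "(\<Sum>i=0..k. erw_g p f (real i / real k) * real (k choose i)
      * ((1+(-1)::real)/2)^i * ((1-(-1))/2)^(k-i)) = (\<Sum>i\<in>{0}. erw_g p f (real i / real k) * real (k choose i)
      * ((1+(-1)::real)/2)^i * ((1-(-1))/2)^(k-i))"
    by (intro sum.mono_neutral_right) auto
  then show ?thesis unfolding H_alt by simp
qed

lemma H_cont: "continuous_on A (erw_H p f k)"
  unfolding erw_H_def by (intro continuous_intros)

lemma pascal_sum:
  fixes b c :: real
  shows "(\<Sum>j\<le>k. real (k choose j) * b^j * c^(k-j) * (b * G (Suc j) + c * G j))
       = (\<Sum>j\<le>Suc k. real (Suc k choose j) * b^j * c^(Suc k - j) * G j)"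
proof -
  have A: "(\<Sum>j\<le>Suc k. real (Suc k choose j) * b^j * c^(Suc k - j) * G j)
     = c^(Suc k) * G 0 + (\<Sum>j\<le>k. real (k choose j) * b^(Suc j) * c^(k-j) * G (Suc j))
         + (\<Sum>j\<le>k. real (k choose Suc j) * b^(Suc j) * c^(k-j) * G (Suc j))"
    by (subst sum.atMost_Suc_shift) (simp add: sum.distrib algebra_simps)
  have B: "(\<Sum>j\<le>Suc k. real (k choose j) * b^j * c^(Suc k - j) * G j)
     = c^(Suc k) * G 0 + (\<Sum>j\<le>k. real (k choose Suc j) * b^(Suc j) * c^(k-j) * G (Suc j))"
    by (subst sum.atMost_Suc_shift) simp
  have C: "(\<Sum>j\<le>Suc k. real (k choose j) * b^j * c^(Suc k - j) * G j)
     = (\<Sum>j\<le>k. real (k choose j) * b^j * c^(Suc k - j) * G j)"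
    by simp
  have D: "(\<Sum>j\<le>k. real (k choose j) * b^j * c^(k-j) * (b * G (Suc j) + c * G j))
     = (\<Sum>j\<le>k. real (k choose j) * b^(Suc j) * c^(k-j) * G (Suc j))
       + (\<Sum>j\<le>k. real (k choose j) * b^j * c^(Suc k - j) * G j)"
    by (auto simp: sum.distrib algebra_simps Suc_diff_le intro!: sum.cong)
  show ?thesis using A B C D by linarith
qed

lemma count_binom:
  assumes "finite A" "B \<subseteq> A"
  shows "(\<Sum>v\<in>{..<k} \<rightarrow>\<^sub>E A. G (card {i. i < k \<and> v i \<in> B}))
       = (\<Sum>j\<le>k. real (k choose j) * real (card B)^j * real (card A - card B)^(k-j) * G j)"
  using assms
proof (induction k arbitrary: G)
  case 0
  then show ?case by simp
next
  case (Suc k)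
  let ?b = "real (card B)" and ?c = "real (card A - card B)"
  have fin: "finite ({..<k} \<rightarrow>\<^sub>E A)" using Suc.prems by (simp add: finite_PiE)
  have eq: "{..<Suc k} \<rightarrow>\<^sub>E A = (\<lambda>(y, g). g(k := y)) ` (A \<times> ({..<k} \<rightarrow>\<^sub>E A))"
    using PiE_insert_eq[of k "{..<k}" "\<lambda>_. A"] by (simp add: lessThan_Suc)
  have inj: "inj_on (\<lambda>(y, g). g(k := y)) (A \<times> ({..<k} \<rightarrow>\<^sub>E A))"
    using inj_combinator[of k "{..<k}" "\<lambda>_. A"] by simp
  have cardeq: "card {i. i < Suc k \<and> (g(k := y)) i \<in> B} = card {i. i < k \<and> g i \<in> B} + (if y \<in> B then 1 else 0)"
    for g :: "nat \<Rightarrow> 'a" and y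
  proof -
    have "{i. i < Suc k \<and> (g(k := y)) i \<in> B} = {i. i < k \<and> g i \<in> B} \<union> (if y \<in> B then {k} else {})"
      by (auto simp: less_Suc_eq)
    then show ?thesis by (auto simp: card_insert_if)
  qed
  have inner: "(\<Sum>y\<in>A. G (card {i. i < k \<and> g i \<in> B} + (if y \<in> B then 1 else 0)))
      = ?b * G (Suc (card {i. i < k \<and> g i \<in> B})) + ?c * G (card {i. i < k \<and> g i \<in> B})" for g :: "nat \<Rightarrow> 'a"
  proof -
    define F where "F = (\<lambda>y. G (card {i. i < k \<and> g i \<in> B} + (if y \<in> B then 1 else 0)))"
    have "sum F A = sum F B + sum F (A - B)"
      using Suc.prems sum.subset_diff[of B A F] by (simp add: add.commute)
    also have "sum F B = (\<Sum>y\<in>B. G (Suc (card {i. i < k \<and> g i \<in> B})))"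
      unfolding F_def by (rule sum.cong) auto
    also have "sum F (A - B) = (\<Sum>y\<in>A - B. G (card {i. i < k \<and> g i \<in> B}))"
      unfolding F_def by (rule sum.cong) auto
    finally have "sum F A = ?b * G (Suc (card {i. i < k \<and> g i \<in> B})) + ?c * G (card {i. i < k \<and> g i \<in> B})"
      using Suc.prems by (simp add: card_Diff_subset finite_subset)
    then show ?thesis unfolding F_def .
  qed
  have "(\<Sum>v\<in>{..<Suc k} \<rightarrow>\<^sub>E A. G (card {i. i < Suc k \<and> v i \<in> B}))
      = (\<Sum>(y,g)\<in>A \<times> ({..<k} \<rightarrow>\<^sub>E A). G (card {i. i < k \<and> g i \<in> B} + (if y \<in> B then 1 else 0)))"
  proof (rule sum.reindex_cong[OF inj eq])
    fix x assume "x \<in> A \<times> ({..<k} \<rightarrow>\<^sub>E A)"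
    obtain y g where x: "x = (y, g)" by (cases x)
    show "G (card {i. i < Suc k \<and> ((\<lambda>(y, g). g(k := y)) x) i \<in> B})
       = (case x of (y, g) \<Rightarrow> G (card {i. i < k \<and> g i \<in> B} + (if y \<in> B then 1 else 0)))"
      unfolding x prod.case by (simp only: cardeq)
  qed
  also have "\<dots> = (\<Sum>y\<in>A. \<Sum>g\<in>{..<k} \<rightarrow>\<^sub>E A. G (card {i. i < k \<and> g i \<in> B} + (if y \<in> B then 1 else 0)))"
    by (rule sum.cartesian_product[symmetric])
  also have "\<dots> = (\<Sum>g\<in>{..<k} \<rightarrow>\<^sub>E A. \<Sum>y\<in>A. G (card {i. i < k \<and> g i \<in> B} + (if y \<in> B then 1 else 0)))"
    by (rule sum.swap)
  also have "\<dots> = (\<Sum>g\<in>{..<k} \<rightarrow>\<^sub>E A. ?b * G (Suc (card {i. i < k \<and> g i \<in> B})) + ?c * G (card {i. i < k \<and> g i \<in> B}))"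
    by (rule sum.cong[OF refl], rule inner)
  also have "\<dots> = (\<Sum>j\<le>k. real (k choose j) * ?b^j * ?c^(k-j) * (?b * G (Suc j) + ?c * G j))"
    by (rule Suc.IH[OF Suc.prems])
  also have "\<dots> = (\<Sum>j\<le>Suc k. real (Suc k choose j) * ?b^j * ?c^(Suc k - j) * G j)"
    by (rule pascal_sum)
  finally show ?case .
qed

definition Hist :: "nat \<Rightarrow> nat \<Rightarrow> ((nat \<Rightarrow> real) \<times> (nat \<Rightarrow> nat \<Rightarrow> nat)) set" where
  "Hist k n = ({1..n} \<rightarrow>\<^sub>E {-1,1}) \<times> (Pi\<^sub>E {1..<n} (\<lambda>m. {..<k} \<rightarrow>\<^sub>E {1..m}))"

definition hpr :: "real \<Rightarrow> real \<Rightarrow> (real \<Rightarrow> real) \<Rightarrow> nat \<Rightarrow> nat \<Rightarrow> (nat \<Rightarrow> real) \<Rightarrow> (nat \<Rightarrow> nat \<Rightarrow> nat) \<Rightarrow> real" where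
  "hpr q p f k n x u = (if x 1 = 1 then q else 1 - q) *
          (\<Prod>m \<in> {1..<n}. (1 / real m) ^ k *
              erw_step_prob p f k (card {i. i < k \<and> x (u m i) = 1}) (x (Suc m)))"

definition Sx :: "(nat \<Rightarrow> real) \<Rightarrow> nat \<Rightarrow> real" where
  "Sx x n = (\<Sum>i = 1..n. x i)"

definition Mx :: "real \<Rightarrow> (real \<Rightarrow> real) \<Rightarrow> nat \<Rightarrow> (nat \<Rightarrow> real) \<Rightarrow> nat \<Rightarrow> real" where
  "Mx p f k x n = (\<Sum>m\<in>{1..<n}. (x (Suc m) - erw_H p f k (Sx x m / real m)))"

lemma finite_Hist: "finite (Hist k n)"
  unfolding Hist_def by (intro finite_cartesian_product finite_PiE) auto

lemma Hist_decomp: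
  assumes "n \<ge> 1"
  shows "(\<Sum>h\<in>Hist k (Suc n). F h) =
    (\<Sum>(x,u)\<in>Hist k n. \<Sum>v\<in>{..<k} \<rightarrow>\<^sub>E {1..n}. \<Sum>s\<in>{-1,1::real}. F (x(Suc n := s), u(n := v)))"
proof -
  let ?S = "Hist k n \<times> (({..<k} \<rightarrow>\<^sub>E {1..n}) \<times> {-1,1::real})"
  have "(\<Sum>h\<in>Hist k (Suc n). F h) = (\<Sum>((x,u),(v,s))\<in>?S. F (x(Suc n := s), u(n := v)))"
  proof (rule sum.reindex_bij_witness[symmetric, where i = "\<lambda>(x,u). ((x(Suc n := undefined), u(n := undefined)), (u n, x (Suc n)))"])
    fix a assume a: "a \<in> ?S"
    then obtain x u v s where av: "a = ((x,u),(v,s))" by (metis prod.collapse)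
    have x: "x \<in> {1..n} \<rightarrow>\<^sub>E {-1,1}" and u: "u \<in> Pi\<^sub>E {1..<n} (\<lambda>m. {..<k} \<rightarrow>\<^sub>E {1..m})"
      and v: "v \<in> {..<k} \<rightarrow>\<^sub>E {1..n}" and s: "s \<in> {-1,1}" using a av by (auto simp: Hist_def)
    have xs: "x (Suc n) = undefined" using x by (auto simp: PiE_iff extensional_def)
    have un: "u n = undefined" using u by (auto simp: PiE_iff extensional_def)
    show "(case (case a of ((x, u), v, s) \<Rightarrow> (x(Suc n := s), u(n := v))) of
          (x, u) \<Rightarrow> ((x(Suc n := undefined), u(n := undefined)), u n, x (Suc n))) = a"
      unfolding av using xs un by (simp add: fun_upd_idem)
    have "x(Suc n := s) \<in> {1..Suc n} \<rightarrow>\<^sub>E {-1,1}" using x s by (auto simp: PiE_iff extensional_def)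
    moreover have "u(n := v) \<in> Pi\<^sub>E {1..<Suc n} (\<lambda>m. {..<k} \<rightarrow>\<^sub>E {1..m})"
      using u v assms by (auto simp: PiE_iff extensional_def less_Suc_eq)
    ultimately show "(case a of ((x, u), v, s) \<Rightarrow> (x(Suc n := s), u(n := v))) \<in> Hist k (Suc n)"
      unfolding av by (simp add: Hist_def)
  next
    fix b assume b: "b \<in> Hist k (Suc n)"
    then obtain x u where bv: "b = (x,u)" by (metis prod.collapse)
    have x: "x \<in> {1..Suc n} \<rightarrow>\<^sub>E {-1,1}" and u: "u \<in> Pi\<^sub>E {1..<Suc n} (\<lambda>m. {..<k} \<rightarrow>\<^sub>E {1..m})"
      using b bv by (auto simp: Hist_def)
    show "(case case b of (x, u) \<Rightarrow> ((x(Suc n := undefined), u(n := undefined)), u n, x (Suc n)) of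
          ((x, u), v, s) \<Rightarrow> (x(Suc n := s), u(n := v))) = b"
      unfolding bv by simp
    have "x(Suc n := undefined) \<in> {1..n} \<rightarrow>\<^sub>E {-1,1}" using x by (auto simp: PiE_iff extensional_def)
    moreover have "u(n := undefined) \<in> Pi\<^sub>E {1..<n} (\<lambda>m. {..<k} \<rightarrow>\<^sub>E {1..m})"
      using u by (auto simp: PiE_iff extensional_def)
    moreover have "u n \<in> {..<k} \<rightarrow>\<^sub>E {1..n}" using u assms by (auto simp: PiE_iff)
    moreover have "x (Suc n) \<in> {-1,1}" using x by (auto simp: PiE_iff)
    ultimately show "(case b of (x, u) \<Rightarrow> ((x(Suc n := undefined), u(n := undefined)), u n, x (Suc n))) \<in> ?S"
      unfolding bv by (simp add: Hist_def)
  qed (simp add: case_prod_unfold)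
  also have "\<dots> = (\<Sum>(x,u)\<in>Hist k n. \<Sum>(v,s)\<in>({..<k} \<rightarrow>\<^sub>E {1..n}) \<times> {-1,1::real}. F (x(Suc n := s), u(n := v)))"
    by (subst sum.cartesian_product[symmetric]) (simp add: case_prod_unfold)
  also have "\<dots> = (\<Sum>(x,u)\<in>Hist k n. \<Sum>v\<in>{..<k} \<rightarrow>\<^sub>E {1..n}. \<Sum>s\<in>{-1,1::real}. F (x(Suc n := s), u(n := v)))"
    by (subst sum.cartesian_product[symmetric]) (simp add: case_prod_unfold)
  finally show ?thesis .
qed

locale erwp =
  fixes q p :: real and f :: "real \<Rightarrow> real" and k :: nat
  assumes q0: "0 \<le> q" and q1: "q \<le> 1" and p0: "0 < p" and p1: "p < 1" and k1: "k \<ge> 1"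
    and fb: "\<forall>x \<in> {0..1}. f x \<in> {0..1}"
begin

lemma g01: assumes "c \<le> k" shows "0 \<le> erw_g p f (real c / real k)" "erw_g p f (real c / real k) \<le> 1"
proof -
  have "real c / real k \<in> {0..1}" using assms k1 by auto
  then show "0 \<le> erw_g p f (real c / real k)" "erw_g p f (real c / real k) \<le> 1"
    using g_bounds[OF p0 p1] fb by (meson less_eq_real_def)+
qed

lemma step_nonneg: assumes "c \<le> k" shows "0 \<le> erw_step_prob p f k c s"
  using g01[OF assms] by (simp add: erw_step_prob_def)

lemma card_le_k: "card {i. i < k \<and> P i} \<le> k"
  by (rule order.trans[OF card_mono[of "{..<k}"]]) auto

lemma step_sum: "(\<Sum>s\<in>{-1,1::real}. erw_step_prob p f k c s * \<phi> s)
   = erw_g p f (real c / real k) * \<phi> 1 + (1 - erw_g p f (real c / real k)) * \<phi> (-1)"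
  by (simp add: erw_step_prob_def)

lemma hpr_nonneg: assumes "(x,u) \<in> Hist k n" shows "0 \<le> hpr q p f k n x u"
  unfolding hpr_def using q0 q1 step_nonneg[OF card_le_k]
  by (intro mult_nonneg_nonneg prod_nonneg) auto

lemma H_bound': "y \<in> {-1..1} \<Longrightarrow> \<bar>erw_H p f k y\<bar> \<le> 1"
  using H_bound[OF p0 p1 fb] by (simp add: abs_le_iff)

lemma Sx_card:
  assumes x: "x \<in> {1..n} \<rightarrow>\<^sub>E {-1,1}"
  shows "Sx x n = 2 * real (card {m\<in>{1..n}. x m = 1}) - real n"
proof -
  let ?B = "{m\<in>{1..n}. x m = 1}"
  have sub: "?B \<subseteq> {1..n}" by auto
  have "Sx x n = sum x ?B + sum x ({1..n} - ?B)"
    unfolding Sx_def using sum.subset_diff[OF sub finite_atLeastAtMost, of x] by linarith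
  also have "sum x ?B = real (card ?B)" by simp
  also have "sum x ({1..n} - ?B) = (\<Sum>i\<in>{1..n} - ?B. -1)"
    using x by (intro sum.cong) (auto simp: PiE_iff)
  also have "\<dots> = - real (card ({1..n} - ?B))" by simp
  also have "card ({1..n} - ?B) = n - card ?B" by (subst card_Diff_subset) auto
  also have "real (n - card ?B) = real n - real (card ?B)"
    by (rule of_nat_diff) (rule order.trans[OF card_mono[of "{1..n}"]], auto)
  finally show ?thesis by simp
qed

lemma Sx_bound:
  assumes x: "x \<in> {1..n} \<rightarrow>\<^sub>E {-1,1}" and n: "n \<ge> 1"
  shows "Sx x n / real n \<in> {-1..1}"
proof -
  have "card {m\<in>{1..n}. x m = 1} \<le> n"
    by (rule order.trans[OF card_mono[of "{1..n}"]]) auto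
  then show ?thesis using Sx_card[OF x] n by (auto simp: field_simps)
qed

lemma key:
  assumes n: "n \<ge> 1" and x: "x \<in> {1..n} \<rightarrow>\<^sub>E {-1,1}"
  defines "b \<equiv> real (card {m\<in>{1..n}. x m = 1}) / real n"
  shows "(\<Sum>v\<in>{..<k} \<rightarrow>\<^sub>E {1..n}. (1 / real n)^k * G (card {i. i < k \<and> x (v i) = 1}))
     = (\<Sum>j\<le>k. real (k choose j) * b^j * (1 - b)^(k-j) * G j)"
proof -
  let ?B = "{m\<in>{1..n}. x m = 1}"
  have cB: "card ?B \<le> n" by (rule order.trans[OF card_mono[of "{1..n}"]]) auto
  have "(\<Sum>v\<in>{..<k} \<rightarrow>\<^sub>E {1..n}. (1 / real n)^k * G (card {i. i < k \<and> x (v i) = 1}))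
     = (1 / real n)^k * (\<Sum>v\<in>{..<k} \<rightarrow>\<^sub>E {1..n}. G (card {i. i < k \<and> v i \<in> ?B}))"
    unfolding sum_distrib_left
  proof (intro sum.cong refl arg_cong[where f = "\<lambda>t. _ * G t"] arg_cong[where f = card])
    fix v assume "v \<in> {..<k} \<rightarrow>\<^sub>E {1..n}"
    then show "{i. i < k \<and> x (v i) = 1} = {i. i < k \<and> v i \<in> ?B}" by (auto simp: PiE_iff)
  qed
  also have "\<dots> = (1 / real n)^k * (\<Sum>j\<le>k. real (k choose j) * real (card ?B)^j * real (n - card ?B)^(k-j) * G j)"
    by (subst count_binom) auto
  also have "\<dots> = (\<Sum>j\<le>k. real (k choose j) * b^j * (1 - b)^(k-j) * G j)"
    unfolding sum_distrib_left
  proof (intro sum.cong refl)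
    fix j assume j: "j \<in> {..k}"
    have nb: "real (n - card ?B) = real n - real (card ?B)" using cB by (simp add: of_nat_diff)
    have e1: "b^j = real (card ?B)^j / real n^j" unfolding b_def by (simp add: power_divide)
    have "1 - b = (real n - real (card ?B)) / real n" unfolding b_def using n by (simp add: field_simps)
    then have e2: "(1-b)^(k-j) = (real n - real (card ?B))^(k-j) / real n^(k-j)" by (simp add: power_divide)
    have e3: "(1 / real n)^k = 1 / (real n^j * real n^(k-j))"
      using j by (simp add: power_add[symmetric] power_one_over)
    have np: "real n > 0" using n by simp
    show "(1 / real n)^k * (real (k choose j) * real (card ?B)^j * real (n - card ?B)^(k-j) * G j)
        = real (k choose j) * b^j * (1 - b)^(k-j) * G j"
      unfolding nb e1 e2 e3 using np by (simp add: field_simps)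
  qed
  finally show ?thesis .
qed

lemma key2:
  assumes n: "n \<ge> 1" and x: "x \<in> {1..n} \<rightarrow>\<^sub>E {-1,1}"
  defines "b \<equiv> real (card {m\<in>{1..n}. x m = 1}) / real n"
  shows "(\<Sum>v\<in>{..<k} \<rightarrow>\<^sub>E {1..n}. \<Sum>s\<in>{-1,1::real}. (1 / real n)^k *
            erw_step_prob p f k (card {i. i < k \<and> x (v i) = 1}) s * \<phi> s)
     = (\<Sum>j\<le>k. real (k choose j) * b^j * (1 - b)^(k-j) *
          (erw_g p f (real j / real k) * \<phi> 1 + (1 - erw_g p f (real j / real k)) * \<phi> (-1)))"
proof -
  have "(\<Sum>v\<in>{..<k} \<rightarrow>\<^sub>E {1..n}. \<Sum>s\<in>{-1,1::real}. (1 / real n)^k *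
            erw_step_prob p f k (card {i. i < k \<and> x (v i) = 1}) s * \<phi> s)
     = (\<Sum>v\<in>{..<k} \<rightarrow>\<^sub>E {1..n}. (1 / real n)^k *
          (\<lambda>c. erw_g p f (real c / real k) * \<phi> 1 + (1 - erw_g p f (real c / real k)) * \<phi> (-1))
             (card {i. i < k \<and> x (v i) = 1}))"
    by (intro sum.cong refl) (simp add: erw_step_prob_def algebra_simps)
  also have "\<dots> = (\<Sum>j\<le>k. real (k choose j) * b^j * (1 - b)^(k-j) *
          (erw_g p f (real j / real k) * \<phi> 1 + (1 - erw_g p f (real j / real k)) * \<phi> (-1)))"
    using key[OF n x, of "\<lambda>c. erw_g p f (real c / real k) * \<phi> 1 + (1 - erw_g p f (real c / real k)) * \<phi> (-1)"]
    unfolding b_def by simp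
  finally show ?thesis .
qed

lemma K1:
  assumes n: "n \<ge> 1" and x: "x \<in> {1..n} \<rightarrow>\<^sub>E {-1,1}"
  shows "(\<Sum>v\<in>{..<k} \<rightarrow>\<^sub>E {1..n}. \<Sum>s\<in>{-1,1::real}. (1 / real n)^k *
            erw_step_prob p f k (card {i. i < k \<and> x (v i) = 1}) s * 1) = 1"
  unfolding key2[OF n x] using binom_one[of k] by (simp add: atLeast0AtMost)

lemma K2:
  assumes n: "n \<ge> 1" and x: "x \<in> {1..n} \<rightarrow>\<^sub>E {-1,1}"
  shows "(\<Sum>v\<in>{..<k} \<rightarrow>\<^sub>E {1..n}. \<Sum>s\<in>{-1,1::real}. (1 / real n)^k *
            erw_step_prob p f k (card {i. i < k \<and> x (v i) = 1}) s * (s - erw_H p f k (Sx x n / real n))) = 0"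
proof -
  define b where "b = real (card {m\<in>{1..n}. x m = 1}) / real n"
  define Hh where "Hh = erw_H p f k (Sx x n / real n)"
  let ?w = "\<lambda>j. real (k choose j) * b^j * (1 - b)^(k-j)"
  have y: "Sx x n / real n = 2 * b - 1" unfolding Sx_card[OF x] b_def using n by (simp add: field_simps)
  have yy: "(1 + (2*b - 1))/2 = b" "(1 - (2*b-1))/2 = 1 - b" by simp_all
  have H: "Hh = 2 * (\<Sum>j\<le>k. erw_g p f (real j / real k) * ?w j) - 1"
    unfolding Hh_def H_alt y yy by (simp add: atLeast0AtMost mult_ac)
  have w1: "(\<Sum>j\<le>k. ?w j) = 1" using binom_one[of k b] by (simp add: atLeast0AtMost)
  have "(\<Sum>j\<le>k. ?w j * (erw_g p f (real j / real k) * (1 - Hh) + (1 - erw_g p f (real j / real k)) * (-1 - Hh)))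
      = 2 * (\<Sum>j\<le>k. erw_g p f (real j / real k) * ?w j) - (1 + Hh) * (\<Sum>j\<le>k. ?w j)"
    by (simp add: sum_distrib_left sum_subtractf algebra_simps)
  also have "\<dots> = 0" using H w1 by simp
  finally show ?thesis unfolding key2[OF n x] b_def[symmetric] Hh_def[symmetric] .
qed

end

lemma Sx_upd: "m \<le> n \<Longrightarrow> Sx (x(Suc n := s)) m = Sx x m"
  unfolding Sx_def by (intro sum.cong) auto

lemma Mx_step:
  assumes "n \<ge> 1"
  shows "Mx p f k (x(Suc n := s)) (Suc n) = Mx p f k x n + (s - erw_H p f k (Sx x n / real n))"
proof -
  have "Mx p f k (x(Suc n := s)) (Suc n) = Mx p f k (x(Suc n := s)) n + (s - erw_H p f k (Sx x n / real n))"
    unfolding Mx_def using assms by (simp add: sum.atLeastLessThan_Suc Sx_upd)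
  also have "Mx p f k (x(Suc n := s)) n = Mx p f k x n"
    unfolding Mx_def by (intro sum.cong) (auto simp: Sx_upd)
  finally show ?thesis .
qed

lemma Mx_cong: "(\<And>m. m \<in> {1..n} \<Longrightarrow> x m = x' m) \<Longrightarrow> Mx p f k x n = Mx p f k x' n"
proof -
  assume h: "\<And>m. m \<in> {1..n} \<Longrightarrow> x m = x' m"
  have "Sx x m = Sx x' m" if "m < n" for m unfolding Sx_def using that h by (intro sum.cong) auto
  then show ?thesis unfolding Mx_def using h by (intro sum.cong) auto
qed

context erwp
begin

lemma hpr_step:
  assumes n: "n \<ge> 1" and xu: "(x,u) \<in> Hist k n" and v: "v \<in> {..<k} \<rightarrow>\<^sub>E {1..n}"
  shows "hpr q p f k (Suc n) (x(Suc n := s)) (u(n := v)) =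
     hpr q p f k n x u * ((1 / real n)^k * erw_step_prob p f k (card {i. i < k \<and> x (v i) = 1}) s)"
proof -
  have u: "\<And>m i. m \<in> {1..<n} \<Longrightarrow> i < k \<Longrightarrow> u m i \<in> {1..m}" using xu by (auto simp: Hist_def PiE_iff)
  have x1: "(x(Suc n := s)) 1 = x 1" using n by simp
  have P: "(\<Prod>m \<in> {1..<n}. (1 / real m) ^ k *
              erw_step_prob p f k (card {i. i < k \<and> (x(Suc n := s)) ((u(n := v)) m i) = 1}) ((x(Suc n := s)) (Suc m)))
         = (\<Prod>m \<in> {1..<n}. (1 / real m) ^ k *
              erw_step_prob p f k (card {i. i < k \<and> x (u m i) = 1}) (x (Suc m)))"
  proof (intro prod.cong refl)
    fix m assume m: "m \<in> {1..<n}"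
    have ne: "u m i \<noteq> Suc n" if "i < k" for i
    proof -
      have "u m i \<le> m" using u[OF m that] by auto
      then show ?thesis using m by auto
    qed
    have E: "{i. i < k \<and> (x(Suc n := s)) ((u(n := v)) m i) = 1} = {i. i < k \<and> x (u m i) = 1}"
      using m ne by auto
    then show "(1 / real m) ^ k *
              erw_step_prob p f k (card {i. i < k \<and> (x(Suc n := s)) ((u(n := v)) m i) = 1}) ((x(Suc n := s)) (Suc m))
         = (1 / real m) ^ k * erw_step_prob p f k (card {i. i < k \<and> x (u m i) = 1}) (x (Suc m))"
      unfolding E using m by simp
  qed
  have L: "{i. i < k \<and> (x(Suc n := s)) (v i) = 1} = {i. i < k \<and> x (v i) = 1}"
    using v by (auto simp: PiE_iff) (metis lessThan_iff not_less_eq_eq order_refl)+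
  show ?thesis
    unfolding hpr_def x1 prod.atLeastLessThan_Suc[OF n] P L fun_upd_same
    by (simp only: mult.assoc)
qed

lemma Hist_step_sum:
  assumes n: "n \<ge> 1"
  shows "(\<Sum>(x,u)\<in>Hist k (Suc n). hpr q p f k (Suc n) x u * \<Phi> x) =
    (\<Sum>(x,u)\<in>Hist k n. hpr q p f k n x u * (\<Sum>v\<in>{..<k} \<rightarrow>\<^sub>E {1..n}. \<Sum>s\<in>{-1,1::real}.
        (1 / real n)^k * erw_step_prob p f k (card {i. i < k \<and> x (v i) = 1}) s * \<Phi> (x(Suc n := s))))"
proof -
  have "(\<Sum>(x,u)\<in>Hist k (Suc n). hpr q p f k (Suc n) x u * \<Phi> x) =
    (\<Sum>(x,u)\<in>Hist k n. \<Sum>v\<in>{..<k} \<rightarrow>\<^sub>E {1..n}. \<Sum>s\<in>{-1,1::real}.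
        hpr q p f k (Suc n) (x(Suc n := s)) (u(n := v)) * \<Phi> (x(Suc n := s)))"
    using Hist_decomp[OF n, where k=k and F="\<lambda>(x,u). hpr q p f k (Suc n) x u * \<Phi> x"] by simp
  also have "\<dots> = (\<Sum>(x,u)\<in>Hist k n. hpr q p f k n x u * (\<Sum>v\<in>{..<k} \<rightarrow>\<^sub>E {1..n}. \<Sum>s\<in>{-1,1::real}.
        (1 / real n)^k * erw_step_prob p f k (card {i. i < k \<and> x (v i) = 1}) s * \<Phi> (x(Suc n := s))))"
  proof (intro sum.cong refl)
    fix h assume h: "h \<in> Hist k n"
    obtain x u where hv: "h = (x,u)" by (cases h)
    have xu: "(x,u) \<in> Hist k n" using h hv by simp
    show "(case h of (x,u) \<Rightarrow> \<Sum>v\<in>{..<k} \<rightarrow>\<^sub>E {1..n}. \<Sum>s\<in>{-1,1::real}.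
        hpr q p f k (Suc n) (x(Suc n := s)) (u(n := v)) * \<Phi> (x(Suc n := s))) =
      (case h of (x,u) \<Rightarrow> hpr q p f k n x u * (\<Sum>v\<in>{..<k} \<rightarrow>\<^sub>E {1..n}. \<Sum>s\<in>{-1,1::real}.
        (1 / real n)^k * erw_step_prob p f k (card {i. i < k \<and> x (v i) = 1}) s * \<Phi> (x(Suc n := s))))"
      unfolding hv prod.case sum_distrib_left
      by (intro sum.cong refl) (simp add: hpr_step[OF n xu] mult_ac)
  qed
  finally show ?thesis .
qed

lemma sum_PiE_single:
  "(\<Sum>x\<in>{a} \<rightarrow>\<^sub>E S. F x) = (\<Sum>s\<in>S. F ((\<lambda>_. undefined)(a := s)))"
proof -
  have "{a} \<rightarrow>\<^sub>E S = (\<lambda>s. (\<lambda>_. undefined)(a := s)) ` S"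
  proof
    show "{a} \<rightarrow>\<^sub>E S \<subseteq> (\<lambda>s. (\<lambda>_. undefined)(a := s)) ` S"
    proof
      fix x assume x: "x \<in> {a} \<rightarrow>\<^sub>E S"
      then have "x = (\<lambda>_. undefined)(a := x a)" by (auto simp: PiE_iff extensional_def fun_eq_iff)
      moreover have "x a \<in> S" using x by auto
      ultimately show "x \<in> (\<lambda>s. (\<lambda>_. undefined)(a := s)) ` S" by blast
    qed
  qed (auto simp: PiE_iff extensional_def split: if_splits)
  moreover have "inj_on (\<lambda>s. (\<lambda>_. undefined)(a := s)) S"
    by (auto simp: inj_on_def fun_eq_iff)
  ultimately show ?thesis by (simp add: sum.reindex)
qed

lemma Hist_one_sum:
  "(\<Sum>(x,u)\<in>Hist k 1. F x u) = (\<Sum>s\<in>{-1,1::real}. F ((\<lambda>_. undefined)(1 := s)) (\<lambda>_. undefined))"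
proof -
  have "Hist k 1 = ({1} \<rightarrow>\<^sub>E {-1,1}) \<times> {\<lambda>_. undefined}" by (simp add: Hist_def)
  then have "(\<Sum>(x,u)\<in>Hist k 1. F x u) = (\<Sum>x\<in>{1} \<rightarrow>\<^sub>E {-1,1::real}. F x (\<lambda>_. undefined))"
    by (simp add: sum.cartesian_product[symmetric])
  also have "\<dots> = (\<Sum>s\<in>{-1,1::real}. F ((\<lambda>_. undefined)(1 := s)) (\<lambda>_. undefined))"
    by (rule sum_PiE_single)
  finally show ?thesis .
qed

lemma S1: "n \<ge> 1 \<Longrightarrow> (\<Sum>(x,u)\<in>Hist k n. hpr q p f k n x u) = 1"
proof (induction n rule: nat_induct_at_least)
  case base
  show ?case unfolding Hist_one_sum by (simp add: hpr_def)
next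
  case (Suc n)
  have "(\<Sum>(x,u)\<in>Hist k (Suc n). hpr q p f k (Suc n) x u) = (\<Sum>(x,u)\<in>Hist k (Suc n). hpr q p f k (Suc n) x u * (\<lambda>_. 1) x)"
    by simp
  also have "\<dots> = (\<Sum>(x,u)\<in>Hist k n. hpr q p f k n x u * 1)"
    unfolding Hist_step_sum[OF Suc.hyps(1)]
  proof (intro sum.cong refl)
    fix h assume h: "h \<in> Hist k n"
    obtain x u where hv: "h = (x,u)" by (cases h)
    have x: "x \<in> {1..n} \<rightarrow>\<^sub>E {-1,1}" using h hv by (simp add: Hist_def)
    show "(case h of (x, u) \<Rightarrow> hpr q p f k n x u *
          (\<Sum>v\<in>{..<k} \<rightarrow>\<^sub>E {1..n}. \<Sum>s\<in>{- 1, 1}. (1 / real n) ^ k * erw_step_prob p f k (card {i. i < k \<and> x (v i) = 1}) s * (\<lambda>_. 1) (x(Suc n := s)))) =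
         (case h of (x, u) \<Rightarrow> hpr q p f k n x u * 1)"
      unfolding hv prod.case using K1[OF Suc.hyps(1) x] by simp
  qed
  finally show ?case using Suc.IH by simp
qed

end

lemma sq_expand:
  fixes W :: "'a \<Rightarrow> 'b \<Rightarrow> real"
  shows "(\<Sum>a\<in>A. \<Sum>b\<in>B. W a b * (M + D b)^2) =
    M^2 * (\<Sum>a\<in>A. \<Sum>b\<in>B. W a b) + 2 * M * (\<Sum>a\<in>A. \<Sum>b\<in>B. W a b * D b) + (\<Sum>a\<in>A. \<Sum>b\<in>B. W a b * (D b)^2)"
proof -
  have e: "W a b * (M + D b)^2 = M^2 * W a b + 2 * M * (W a b * D b) + W a b * (D b)^2" for a b
    by (simp add: power2_eq_square algebra_simps)
  show ?thesis unfolding e by (simp add: sum.distrib sum_distrib_left)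
qed

context erwp
begin

lemma inner_bound:
  assumes n: "n \<ge> 1" and x: "x \<in> {1..n} \<rightarrow>\<^sub>E {-1,1}"
  shows "(\<Sum>v\<in>{..<k} \<rightarrow>\<^sub>E {1..n}. \<Sum>s\<in>{-1,1::real}.
        (1 / real n)^k * erw_step_prob p f k (card {i. i < k \<and> x (v i) = 1}) s * (Mx p f k (x(Suc n := s)) (Suc n))^2)
      \<le> (Mx p f k x n)^2 + 4"
proof -
  define W where "W v s = (1 / real n)^k * erw_step_prob p f k (card {i. i < k \<and> x (v i) = 1}) s" for v s
  define Hh where "Hh = erw_H p f k (Sx x n / real n)"
  define M where "M = Mx p f k x n"
  have W0: "W v s \<ge> 0" for v s unfolding W_def using step_nonneg[OF card_le_k] by simp
  have Hb: "\<bar>Hh\<bar> \<le> 1" unfolding Hh_def by (rule H_bound'[OF Sx_bound[OF x n]])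
  have K1': "(\<Sum>v\<in>{..<k} \<rightarrow>\<^sub>E {1..n}. \<Sum>s\<in>{-1,1::real}. W v s) = 1"
    using K1[OF n x] unfolding W_def by simp
  have K2': "(\<Sum>v\<in>{..<k} \<rightarrow>\<^sub>E {1..n}. \<Sum>s\<in>{-1,1::real}. W v s * (s - Hh)) = 0"
    using K2[OF n x] unfolding W_def Hh_def by simp
  have "(\<Sum>v\<in>{..<k} \<rightarrow>\<^sub>E {1..n}. \<Sum>s\<in>{-1,1::real}. W v s * (Mx p f k (x(Suc n := s)) (Suc n))^2)
     = (\<Sum>v\<in>{..<k} \<rightarrow>\<^sub>E {1..n}. \<Sum>s\<in>{-1,1::real}. W v s * (M + (s - Hh))^2)"
    unfolding Mx_step[OF n] M_def Hh_def by simp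
  also have "\<dots> = M^2 * 1 + 2 * M * 0 + (\<Sum>v\<in>{..<k} \<rightarrow>\<^sub>E {1..n}. \<Sum>s\<in>{-1,1::real}. W v s * (s - Hh)^2)"
    unfolding sq_expand K1' K2' ..
  finally have E: "(\<Sum>v\<in>{..<k} \<rightarrow>\<^sub>E {1..n}. \<Sum>s\<in>{-1,1::real}. W v s * (Mx p f k (x(Suc n := s)) (Suc n))^2)
     = M^2 + (\<Sum>v\<in>{..<k} \<rightarrow>\<^sub>E {1..n}. \<Sum>s\<in>{-1,1::real}. W v s * (s - Hh)^2)" by simp
  have "(\<Sum>v\<in>{..<k} \<rightarrow>\<^sub>E {1..n}. \<Sum>s\<in>{-1,1::real}. W v s * (s - Hh)^2)
      \<le> (\<Sum>v\<in>{..<k} \<rightarrow>\<^sub>E {1..n}. \<Sum>s\<in>{-1,1::real}. W v s * 4)"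
  proof (intro sum_mono mult_left_mono W0)
    fix s :: real assume "s \<in> {-1,1}"
    then have a: "\<bar>s - Hh\<bar> \<le> 2" using Hb by (auto simp: abs_le_iff)
    have "(s - Hh)^2 = \<bar>s - Hh\<bar>^2" by simp
    also have "\<dots> \<le> 2^2" by (rule power_mono[OF a]) simp
    finally show "(s - Hh)^2 \<le> 4" by simp
  qed
  also have "\<dots> = (\<Sum>v\<in>{..<k} \<rightarrow>\<^sub>E {1..n}. \<Sum>s\<in>{-1,1::real}. W v s) * 4"
    by (simp only: sum_distrib_right)
  also have "\<dots> = 4" using K1' by simp
  finally have T: "(\<Sum>v\<in>{..<k} \<rightarrow>\<^sub>E {1..n}. \<Sum>s\<in>{-1,1::real}. W v s * (s - Hh)^2) \<le> 4" .
  have "(\<Sum>v\<in>{..<k} \<rightarrow>\<^sub>E {1..n}. \<Sum>s\<in>{-1,1::real}. W v s * (Mx p f k (x(Suc n := s)) (Suc n))^2)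
     \<le> M^2 + 4" unfolding E using T by linarith
  then show ?thesis unfolding W_def M_def .
qed

lemma S2: "n \<ge> 1 \<Longrightarrow> (\<Sum>(x,u)\<in>Hist k n. hpr q p f k n x u * (Mx p f k x n)^2) \<le> 4 * (real n - 1)"
proof (induction n rule: nat_induct_at_least)
  case base
  show ?case by (simp add: Mx_def)
next
  case (Suc n)
  have "(\<Sum>(x,u)\<in>Hist k (Suc n). hpr q p f k (Suc n) x u * (Mx p f k x (Suc n))^2)
     = (\<Sum>(x,u)\<in>Hist k n. hpr q p f k n x u * (\<Sum>v\<in>{..<k} \<rightarrow>\<^sub>E {1..n}. \<Sum>s\<in>{-1,1::real}.
        (1 / real n)^k * erw_step_prob p f k (card {i. i < k \<and> x (v i) = 1}) s * (Mx p f k (x(Suc n := s)) (Suc n))^2))"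
    by (rule Hist_step_sum[OF Suc.hyps(1), where \<Phi>="\<lambda>x. (Mx p f k x (Suc n))^2"])
  also have "\<dots> \<le> (\<Sum>(x,u)\<in>Hist k n. hpr q p f k n x u * ((Mx p f k x n)^2 + 4))"
  proof (intro sum_mono)
    fix h assume h: "h \<in> Hist k n"
    obtain x u where hv: "h = (x,u)" by (cases h)
    have x: "x \<in> {1..n} \<rightarrow>\<^sub>E {-1,1}" using h hv by (simp add: Hist_def)
    have xu: "(x,u) \<in> Hist k n" using h hv by simp
    show "(case h of (x, u) \<Rightarrow> hpr q p f k n x u *
          (\<Sum>v\<in>{..<k} \<rightarrow>\<^sub>E {1..n}. \<Sum>s\<in>{-1,1::real}. (1 / real n) ^ k * erw_step_prob p f k (card {i. i < k \<and> x (v i) = 1}) s * (Mx p f k (x(Suc n := s)) (Suc n))^2)) \<le>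
         (case h of (x, u) \<Rightarrow> hpr q p f k n x u * ((Mx p f k x n)^2 + 4))"
      unfolding hv prod.case using inner_bound[OF Suc.hyps(1) x] hpr_nonneg[OF xu]
      by (simp add: mult_left_mono)
  qed
  also have "\<dots> = (\<Sum>(x,u)\<in>Hist k n. hpr q p f k n x u * (Mx p f k x n)^2) + 4 * (\<Sum>(x,u)\<in>Hist k n. hpr q p f k n x u)"
    by (simp add: case_prod_unfold sum.distrib sum_distrib_left algebra_simps)
  also have "\<dots> \<le> 4 * (real n - 1) + 4" using Suc.IH S1[OF Suc.hyps(1)] by simp
  finally show ?case by simp
qed

end

lemma summable_inv_sq: "summable (\<lambda>j::nat. 4 / real (Suc j)^2)"
proof -
  have "summable (\<lambda>n::nat. inverse (real n ^ 2))" by (rule inverse_power_summable) simp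
  then have "summable (\<lambda>n::nat. inverse (real (Suc n) ^ 2))" by (subst summable_Suc_iff)
  then have "summable (\<lambda>n::nat. 4 * inverse (real (Suc n) ^ 2))" by (rule summable_mult)
  then show ?thesis by (simp add: divide_inverse)
qed

locale erw = erwp q p f k for q p f k +
  fixes M :: "'a measure" and X :: "nat \<Rightarrow> 'a \<Rightarrow> real" and U :: "nat \<Rightarrow> nat \<Rightarrow> 'a \<Rightarrow> nat"
  assumes ps: "prob_space M" and proc: "erw_process M q p f k X U"
begin

sublocale P: prob_space M by (rule ps)

definition Ev :: "nat \<Rightarrow> (nat \<Rightarrow> real) \<Rightarrow> (nat \<Rightarrow> nat \<Rightarrow> nat) \<Rightarrow> 'a set" where
  "Ev n x u = {\<omega> \<in> space M. (\<forall>m \<in> {1..n}. X m \<omega> = x m) \<and> (\<forall>m \<in> {1..<n}. \<forall>i < k. U m i \<omega> = u m i)}"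

lemma measX: "X m \<in> measurable M (count_space UNIV)" using proc by (simp add: erw_process_def)
lemma measU: "U m i \<in> measurable M (count_space UNIV)" using proc by (simp add: erw_process_def)

lemma Ev_sets: "Ev n x u \<in> sets M"
proof -
  have X1: "{\<omega> \<in> space M. X m \<omega> = c} \<in> sets M" for m c
  proof -
    have "{\<omega> \<in> space M. X m \<omega> = c} = X m -` {c} \<inter> space M" by auto
    then show ?thesis using measurable_sets[OF measX, of "{c}" m] by simp
  qed
  have U1: "{\<omega> \<in> space M. U m i \<omega> = c} \<in> sets M" for m i c
  proof -
    have "{\<omega> \<in> space M. U m i \<omega> = c} = U m i -` {c} \<inter> space M" by auto
    then show ?thesis using measurable_sets[OF measU, of "{c}" m i] by simp
  qed
  have A: "{\<omega> \<in> space M. \<forall>m \<in> {1..n}. X m \<omega> = x m} \<in> sets M"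
    by (intro sets.sets_Collect_finite_All X1) auto
  have B: "{\<omega> \<in> space M. \<forall>m \<in> {1..<n}. \<forall>i \<in> {..<k}. U m i \<omega> = u m i} \<in> sets M"
    by (intro sets.sets_Collect_finite_All U1) auto
  have "Ev n x u = {\<omega> \<in> space M. \<forall>m \<in> {1..n}. X m \<omega> = x m} \<inter> {\<omega> \<in> space M. \<forall>m \<in> {1..<n}. \<forall>i \<in> {..<k}. U m i \<omega> = u m i}"
    unfolding Ev_def by auto
  then show ?thesis using A B by auto
qed

lemma Ev_fdd:
  assumes n: "n \<ge> 1" and xu: "(x,u) \<in> Hist k n"
  shows "measure M (Ev n x u) = hpr q p f k n x u"
proof -
  have c1: "\<forall>m \<in> {1..n}. x m \<in> {-1, 1}" using xu by (auto simp: Hist_def PiE_iff)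
  have c2: "\<forall>m \<in> {1..<n}. \<forall>i < k. u m i \<in> {1..m}" using xu by (auto simp: Hist_def PiE_iff)
  have "\<forall>n \<ge> 1. \<forall>x :: nat \<Rightarrow> real. \<forall>u :: nat \<Rightarrow> nat \<Rightarrow> nat.
        (\<forall>m \<in> {1..n}. x m \<in> {-1, 1}) \<longrightarrow>
        (\<forall>m \<in> {1..<n}. \<forall>i < k. u m i \<in> {1..m}) \<longrightarrow>
        measure M {\<omega> \<in> space M. (\<forall>m \<in> {1..n}. X m \<omega> = x m) \<and>
                                 (\<forall>m \<in> {1..<n}. \<forall>i < k. U m i \<omega> = u m i)}
        = (if x 1 = 1 then q else 1 - q) *
          (\<Prod>m \<in> {1..<n}. (1 / real m) ^ k *
              erw_step_prob p f k (card {i. i < k \<and> x (u m i) = 1}) (x (Suc m)))"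
    using proc unfolding erw_process_def by blast
  then have "measure M {\<omega> \<in> space M. (\<forall>m \<in> {1..n}. X m \<omega> = x m) \<and>
                                 (\<forall>m \<in> {1..<n}. \<forall>i < k. U m i \<omega> = u m i)}
        = (if x 1 = 1 then q else 1 - q) *
          (\<Prod>m \<in> {1..<n}. (1 / real m) ^ k *
              erw_step_prob p f k (card {i. i < k \<and> x (u m i) = 1}) (x (Suc m)))"
    using n c1 c2 by blast
  then show ?thesis unfolding Ev_def hpr_def .
qed

lemma Ev_disj: "disjoint_family_on (\<lambda>h. Ev n (fst h) (snd h)) (Hist k n)"
  unfolding disjoint_family_on_def
proof (intro ballI impI)
  fix h h' assume h: "h \<in> Hist k n" and h': "h' \<in> Hist k n" and ne: "h \<noteq> h'"
  show "Ev n (fst h) (snd h) \<inter> Ev n (fst h') (snd h') = {}"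
  proof (rule ccontr)
    assume "Ev n (fst h) (snd h) \<inter> Ev n (fst h') (snd h') \<noteq> {}"
    then obtain \<omega> where w: "\<omega> \<in> Ev n (fst h) (snd h)" "\<omega> \<in> Ev n (fst h') (snd h')" by blast
    have "fst h = fst h'"
      by (rule PiE_ext[of _ "{1..n}" "\<lambda>_. {-1,1::real}"]) (use h h' w in \<open>auto simp: Hist_def Ev_def\<close>)
    moreover have "snd h = snd h'"
    proof (rule PiE_ext[of _ "{1..<n}" "\<lambda>m. {..<k} \<rightarrow>\<^sub>E {1..m}"])
      show sh: "snd h \<in> Pi\<^sub>E {1..<n} (\<lambda>m. {..<k} \<rightarrow>\<^sub>E {1..m})" using h unfolding Hist_def mem_Times_iff by blast
      show sh': "snd h' \<in> Pi\<^sub>E {1..<n} (\<lambda>m. {..<k} \<rightarrow>\<^sub>E {1..m})" using h' unfolding Hist_def mem_Times_iff by blast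
      fix m assume m: "m \<in> {1..<n}"
      show "snd h m = snd h' m"
      proof (rule PiE_ext[of _ "{..<k}" "\<lambda>_. {1..m}"])
        show "snd h m \<in> {..<k} \<rightarrow>\<^sub>E {1..m}" using PiE_mem[OF sh m] .
        show "snd h' m \<in> {..<k} \<rightarrow>\<^sub>E {1..m}" using PiE_mem[OF sh' m] .
        fix i assume "i \<in> {..<k}"
        then show "snd h m i = snd h' m i" using w m by (auto simp: Ev_def)
      qed
    qed
    ultimately show False using ne by (simp add: prod_eq_iff)
  qed
qed

lemma G_prob: assumes n: "n \<ge> 1" shows "P.prob (\<Union>h\<in>Hist k n. Ev n (fst h) (snd h)) = 1"
proof -
  have "P.prob (\<Union>h\<in>Hist k n. Ev n (fst h) (snd h)) = (\<Sum>h\<in>Hist k n. P.prob (Ev n (fst h) (snd h)))"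
    by (rule measure_finite_Union[OF finite_Hist _ Ev_disj]) (auto simp: Ev_sets)
  also have "\<dots> = (\<Sum>h\<in>Hist k n. hpr q p f k n (fst h) (snd h))"
    by (intro sum.cong refl) (simp add: Ev_fdd[OF n])
  also have "\<dots> = 1" using S1[OF n] by (simp add: case_prod_unfold)
  finally show ?thesis .
qed

lemma AE_G: assumes n: "n \<ge> 1" shows "AE \<omega> in M. \<exists>h\<in>Hist k n. \<omega> \<in> Ev n (fst h) (snd h)"
  using P.AE_prob_1[OF G_prob[OF n]] by auto

definition Bad :: "nat \<Rightarrow> 'a set" where
  "Bad j = (\<Union>h\<in>{h \<in> Hist k ((Suc j)^4). real ((Suc j)^3) < \<bar>Mx p f k (fst h) ((Suc j)^4)\<bar>}.
      Ev ((Suc j)^4) (fst h) (snd h))"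

lemma Bad_sets: "Bad j \<in> sets M"
  unfolding Bad_def using finite_Hist by (intro sets.finite_UN) (auto simp: Ev_sets)

lemma Bad_prob: "P.prob (Bad j) \<le> 4 / real (Suc j)^2"
proof -
  define N where "N = (Suc j)^4"
  define t where "t = real ((Suc j)^3)"
  define BH where "BH = {h \<in> Hist k N. t < \<bar>Mx p f k (fst h) N\<bar>}"
  have N1: "N \<ge> 1" unfolding N_def by simp
  have t0: "t > 0" unfolding t_def by simp
  have finBH: "finite BH" unfolding BH_def using finite_Hist by simp
  have "P.prob (Bad j) \<le> (\<Sum>h\<in>BH. P.prob (Ev N (fst h) (snd h)))"
    unfolding Bad_def N_def[symmetric] t_def[symmetric] BH_def[symmetric]
    by (rule measure_subadditive_finite[OF finBH]) (auto simp: Ev_sets)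
  also have "\<dots> = (\<Sum>h\<in>BH. hpr q p f k N (fst h) (snd h))"
    by (intro sum.cong refl) (simp add: Ev_fdd[OF N1] BH_def)
  also have "\<dots> \<le> (\<Sum>h\<in>BH. hpr q p f k N (fst h) (snd h) * (Mx p f k (fst h) N)^2 / t^2)"
  proof (intro sum_mono)
    fix h assume h: "h \<in> BH"
    have hp: "hpr q p f k N (fst h) (snd h) \<ge> 0" using h hpr_nonneg[of "fst h" "snd h" N] by (simp add: BH_def)
    have lt: "t < \<bar>Mx p f k (fst h) N\<bar>" using h by (simp add: BH_def)
    have "t^2 < \<bar>Mx p f k (fst h) N\<bar>^2"
      by (rule power_strict_mono[OF lt]) (use t0 in auto)
    then have "t^2 < (Mx p f k (fst h) N)^2" by simp
    then have "1 \<le> (Mx p f k (fst h) N)^2 / t^2" using t0 by simp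
    then show "hpr q p f k N (fst h) (snd h) \<le> hpr q p f k N (fst h) (snd h) * (Mx p f k (fst h) N)^2 / t^2"
      using hp mult_left_mono[of 1 "(Mx p f k (fst h) N)^2 / t^2" "hpr q p f k N (fst h) (snd h)"] by simp
  qed
  also have "\<dots> \<le> (\<Sum>h\<in>Hist k N. hpr q p f k N (fst h) (snd h) * (Mx p f k (fst h) N)^2 / t^2)"
    by (rule sum_mono2[OF finite_Hist]) (use t0 in \<open>auto simp: BH_def intro!: divide_nonneg_nonneg mult_nonneg_nonneg hpr_nonneg\<close>)
  also have "\<dots> = (\<Sum>h\<in>Hist k N. hpr q p f k N (fst h) (snd h) * (Mx p f k (fst h) N)^2) / t^2"
    by (simp add: sum_divide_distrib)
  also have "\<dots> \<le> 4 * (real N - 1) / t^2"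
    using S2[OF N1] t0 by (intro divide_right_mono) (auto simp: case_prod_unfold)
  also have "\<dots> \<le> 4 / real (Suc j)^2"
  proof -
    have "4 * (real N - 1) / t^2 \<le> 4 * real N / t^2" using t0 by (intro divide_right_mono) auto
    also have "4 * real N / t^2 = 4 / real (Suc j)^2"
      unfolding N_def t_def by (simp add: field_simps power_mult[symmetric] power_add[symmetric])
    finally show ?thesis .
  qed
  finally show ?thesis .
qed

lemma main_AE:
  "AE \<omega> in M. (\<forall>n\<ge>1. X n \<omega> \<in> {-1,1}) \<and>
      eventually (\<lambda>j. \<bar>Mx p f k (\<lambda>m. X m \<omega>) ((Suc j)^4)\<bar> \<le> real ((Suc j)^3)) sequentially"
proof -
  have AG: "AE \<omega> in M. \<forall>n. n \<ge> 1 \<longrightarrow> (\<exists>h\<in>Hist k n. \<omega> \<in> Ev n (fst h) (snd h))"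
    unfolding AE_all_countable using AE_G by auto
  have BC: "AE \<omega> in M. eventually (\<lambda>j. \<omega> \<in> space M - Bad j) sequentially"
  proof (rule borel_cantelli_AE1)
    show "Bad j \<in> sets M" for j by (rule Bad_sets)
    show "emeasure M (Bad j) < \<infinity>" for j using P.emeasure_finite[of "Bad j"] by (simp add: less_top[symmetric])
    show "summable (\<lambda>j. P.prob (Bad j))"
    proof (rule summable_comparison_test'[OF summable_inv_sq, of 0])
      fix j :: nat
      show "norm (P.prob (Bad j)) \<le> 4 / real (Suc j)^2" using Bad_prob[of j] by simp
    qed
  qed
  show ?thesis
    using AG BC
  proof eventually_elim
    case (elim \<omega>)
    note G = elim(1)
    have X: "X n \<omega> \<in> {-1,1}" if n1: "n \<ge> 1" for n
    proof -
      obtain h where h: "h \<in> Hist k n" "\<omega> \<in> Ev n (fst h) (snd h)" using G n1 by blast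
      then have "X n \<omega> = fst h n" using n1 by (auto simp: Ev_def)
      then show ?thesis using h(1) n1 by (auto simp: Hist_def PiE_iff)
    qed
    have "eventually (\<lambda>j. \<bar>Mx p f k (\<lambda>m. X m \<omega>) ((Suc j)^4)\<bar> \<le> real ((Suc j)^3)) sequentially"
      using elim(2)
    proof eventually_elim
      case (elim j)
      obtain h where h: "h \<in> Hist k ((Suc j)^4)" "\<omega> \<in> Ev ((Suc j)^4) (fst h) (snd h)"
        using G[rule_format, of "(Suc j)^4"] by auto
      have eq: "Mx p f k (\<lambda>m. X m \<omega>) ((Suc j)^4) = Mx p f k (fst h) ((Suc j)^4)"
        by (rule Mx_cong) (use h in \<open>auto simp: Ev_def\<close>)
      have "\<omega> \<notin> Bad j" using elim by auto
      then have "\<not> real ((Suc j)^3) < \<bar>Mx p f k (fst h) ((Suc j)^4)\<bar>"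
        using h unfolding Bad_def by blast
      then show ?case unfolding eq by simp
    qed
    then show ?case using X by blast
  qed
qed

end

lemma delta_exists:
  fixes Hf :: "real \<Rightarrow> real"
  assumes cont: "continuous_on UNIV Hf"
    and sign: "\<forall>w\<in>{-1..1}. w > xs \<longrightarrow> Hf w < w"
    and c: "c > 0"
  shows "\<exists>\<delta>>0. \<forall>w\<in>{-1..1}. w \<ge> xs + c \<longrightarrow> Hf w - w \<le> - \<delta>"
proof (cases "{max (-1) (xs + c)..1} = {}")
  case True
  then show ?thesis by (intro exI[of _ 1]) auto
next
  case False
  have "continuous_on {max (-1) (xs + c)..1} (\<lambda>w. Hf w - w)"
    by (intro continuous_intros continuous_on_subset[OF cont]) auto
  then obtain w0 where w0: "w0 \<in> {max (-1) (xs + c)..1}"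
    and mx: "\<forall>w\<in>{max (-1) (xs + c)..1}. Hf w - w \<le> Hf w0 - w0"
    using continuous_attains_sup[OF compact_Icc False] by blast
  have "Hf w0 < w0" using sign w0 c by auto
  then show ?thesis using mx by (intro exI[of _ "w0 - Hf w0"]) auto
qed

lemma harm_big: "\<exists>n. harm n > (B::real)"
proof -
  define n where "n = nat \<lceil>exp B\<rceil>"
  have "exp B < real n + 1" unfolding n_def by linarith
  then have "ln (exp B) < ln (real n + 1)" by (subst ln_less_cancel_iff) auto
  then have "B < ln (real n + 1)" by simp
  then show ?thesis using ln_le_harm[of n] by (intro exI[of _ n]) linarith
qed

lemma upper:
  fixes Hf :: "real \<Rightarrow> real" and y z :: "nat \<Rightarrow> real"
  assumes cont: "continuous_on UNIV Hf"
    and Hb: "\<forall>w\<in>{-1..1}. \<bar>Hf w\<bar> \<le> 1"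
    and sign: "\<forall>w\<in>{-1..1}. w > xs \<longrightarrow> Hf w < w"
    and yb: "\<forall>n\<ge>1. y n \<in> {-1..1}"
    and rec: "\<forall>n\<ge>1. z (Suc n) = (real n * z n + Hf (y n)) / real (Suc n)"
    and lim: "(\<lambda>n. y n - z n) \<longlonglongrightarrow> 0"
    and e: "e > 0"
  shows "eventually (\<lambda>n. y n \<le> xs + e) sequentially"
proof -
  obtain \<delta> where d0: "\<delta> > 0" and dl: "\<forall>w\<in>{-1..1}. w \<ge> xs + e/8 \<longrightarrow> Hf w - w \<le> - \<delta>"
    using delta_exists[OF cont sign, of "e/8"] e by auto
  define r where "r = min (min (e/8) (\<delta>/2)) 1"
  have r0: "r > 0" unfolding r_def using e d0 by auto
  obtain N1 where N1: "\<forall>n\<ge>N1. \<bar>y n - z n\<bar> < r"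
    using lim r0 unfolding LIMSEQ_def dist_real_def by auto
  define N where "N = max (max N1 1) (nat \<lceil>12 / e\<rceil>)"
  have N1': "N \<ge> N1" "N \<ge> 1" unfolding N_def by auto
  have NE: "3 / real (Suc N) \<le> e/4"
  proof -
    have "12 / e \<le> real N" unfolding N_def by linarith
    then have "12 / e < real (Suc N)" by simp
    then have "12 < e * real (Suc N)" using e by (simp add: field_simps)
    then show ?thesis by (simp add: field_simps)
  qed
  have close: "\<bar>y n - z n\<bar> < r" if "n \<ge> N" for n using N1 N1'(1) that by auto
  have cD: "y n - z n < e/8 \<and> z n - y n < e/8 \<and> y n - z n < \<delta>/2 \<and> z n - y n < \<delta>/2 \<and> y n - z n < 1 \<and> z n - y n < 1"
    if "n \<ge> N" for n
    using close[OF that] unfolding r_def abs_less_iff by auto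
  have yb': "y n \<in> {-1..1}" if "n \<ge> N" for n using yb N1'(2) that by auto
  have zb: "\<bar>z n\<bar> \<le> 2" if "n \<ge> N" for n
    using cD[OF that] yb'[OF that] unfolding abs_le_iff atLeastAtMost_iff by linarith
  have step: "z (Suc n) = z n + (Hf (y n) - z n) / real (Suc n)" if "n \<ge> N" for n
  proof -
    have "z (Suc n) = (real n * z n + Hf (y n)) / real (Suc n)" using rec N1'(2) that by auto
    then show ?thesis by (simp add: field_simps)
  qed
  have down: "z (Suc n) \<le> z n - \<delta> / 2 / real (Suc n)" if n: "n \<ge> N" and zn: "z n > xs + e/4" for n
  proof -
    have "y n \<ge> xs + e/8" using cD[OF n] zn by linarith
    then have "Hf (y n) - y n \<le> - \<delta>" using dl yb'[OF n] by auto
    then have "Hf (y n) - z n \<le> - \<delta>/2" using cD[OF n] by linarith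
    then have "(Hf (y n) - z n) / real (Suc n) \<le> (- \<delta>/2) / real (Suc n)"
      by (intro divide_right_mono) auto
    moreover have "(- \<delta>/2) / real (Suc n) = - (\<delta> / 2 / real (Suc n))" by simp
    ultimately show ?thesis using step[OF n] by linarith
  qed
  have up: "z (Suc n) \<le> z n + 3 / real (Suc N)" if n: "n \<ge> N" for n
  proof -
    have h1: "\<bar>Hf (y n)\<bar> \<le> 1" using Hb yb'[OF n] by blast
    have "Hf (y n) - z n \<le> 3" using h1 zb[OF n] unfolding abs_le_iff by linarith
    then have "(Hf (y n) - z n) / real (Suc n) \<le> 3 / real (Suc n)"
      by (rule divide_right_mono) simp
    also have "3 / real (Suc n) \<le> 3 / real (Suc N)" using n by (intro divide_left_mono) auto
    finally show ?thesis using step[OF n] by linarith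
  qed
  have dec: "z (Suc n) \<le> z n" if n: "n \<ge> N" and zn: "z n > xs + e/4" for n
  proof -
    have "\<delta> / 2 / real (Suc n) \<ge> 0" using d0 by simp
    then show ?thesis using down[OF n zn] by linarith
  qed
  have B: "\<exists>n0\<ge>N. z n0 \<le> xs + e/4"
  proof (rule ccontr)
    assume "\<not> ?thesis"
    then have all: "\<forall>n\<ge>N. z n > xs + e/4" by auto
    have I: "z n \<le> z N - \<delta>/2 * (harm n - harm N)" if "n \<ge> N" for n
      using that
    proof (induction n rule: dec_induct)
      case base then show ?case by simp
    next
      case (step n)
      have "z (Suc n) \<le> z n - \<delta> / 2 / real (Suc n)" using down[OF step(1)] all step(1) by auto
      moreover have "\<delta>/2 * (harm (Suc n) - harm N) = \<delta>/2 * (harm n - harm N) + \<delta> / 2 / real (Suc n)"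
        unfolding harm_Suc by (simp add: inverse_eq_divide field_simps)
      ultimately show ?case using step(3) by linarith
    qed
    obtain n where hn: "harm n > 8 / \<delta> + harm N" using harm_big by blast
    have "n \<ge> N"
    proof (rule ccontr)
      assume "\<not> n \<ge> N"
      then have "harm n \<le> (harm N :: real)" by (intro harm_mono) auto
      moreover have "8 / \<delta> > 0" using d0 by simp
      ultimately show False using hn by linarith
    qed
    have "\<delta>/2 * (harm n - harm N) > \<delta>/2 * (8/\<delta>)" using hn d0 by (intro mult_strict_left_mono) auto
    then have "\<delta>/2 * (harm n - harm N) > 4" using d0 by simp
    then show False using I[OF \<open>n \<ge> N\<close>] zb[OF \<open>n \<ge> N\<close>] zb[OF order.refl] by (auto simp: abs_le_iff)
  qed
  then obtain n0 where n0: "n0 \<ge> N" "z n0 \<le> xs + e/4" by blast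
  have C: "z n \<le> xs + e/4 + 3 / real (Suc N)" if "n \<ge> n0" for n
    using that
  proof (induction n rule: dec_induct)
    case base
    have "3 / real (Suc N) \<ge> 0" by simp
    then show ?case using n0 by linarith
  next
    case (step n)
    have nN: "n \<ge> N" using step(1) n0 by auto
    show ?case
    proof (cases "z n > xs + e/4")
      case True then show ?thesis using dec[OF nN True] step(3) by simp
    next
      case False then show ?thesis using up[OF nN] by simp
    qed
  qed
  show ?thesis unfolding eventually_sequentially
  proof (intro exI[of _ n0] allI impI)
    fix n assume n: "n \<ge> n0"
    have "y n \<le> z n + e/8" using cD[of n] n n0 by linarith
    then show "y n \<le> xs + e" using C[OF n] NE e by linarith
  qed
qed

lemma conv:
  fixes Hf :: "real \<Rightarrow> real" and y z :: "nat \<Rightarrow> real"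
  assumes cont: "continuous_on UNIV Hf"
    and Hb: "\<forall>w\<in>{-1..1}. \<bar>Hf w\<bar> \<le> 1"
    and sign1: "\<forall>w\<in>{-1..1}. w > xs \<longrightarrow> Hf w < w"
    and sign2: "\<forall>w\<in>{-1..1}. w < xs \<longrightarrow> Hf w > w"
    and yb: "\<forall>n\<ge>1. y n \<in> {-1..1}"
    and rec: "\<forall>n\<ge>1. z (Suc n) = (real n * z n + Hf (y n)) / real (Suc n)"
    and lim: "(\<lambda>n. y n - z n) \<longlonglongrightarrow> 0"
  shows "y \<longlonglongrightarrow> xs"
proof (rule tendstoI)
  fix e :: real assume e: "e > 0"
  have u: "eventually (\<lambda>n. y n \<le> xs + e/2) sequentially"
    by (rule upper[OF cont Hb sign1 yb rec lim]) (use e in simp)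
  have cont': "continuous_on UNIV (\<lambda>w. - Hf (- w))"
    by (intro continuous_intros continuous_on_compose2[OF cont]) auto
  have Hb': "\<forall>w\<in>{-1..1}. \<bar>- Hf (- w)\<bar> \<le> 1" using Hb by auto
  have sign': "\<forall>w\<in>{-1..1}. w > - xs \<longrightarrow> - Hf (- w) < w"
  proof (intro ballI impI)
    fix w :: real assume "w \<in> {-1..1}" "w > - xs"
    then have "- w \<in> {-1..1}" "- w < xs" by auto
    then show "- Hf (- w) < w" using sign2 by force
  qed
  have yb': "\<forall>n\<ge>1. - y n \<in> {-1..1}" using yb by auto
  have rec': "\<forall>n\<ge>1. - z (Suc n) = (real n * (- z n) + (- Hf (- (- y n)))) / real (Suc n)"
    using rec by (auto simp: field_simps)
  have lim': "(\<lambda>n. - y n - (- z n)) \<longlonglongrightarrow> 0"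
    using tendsto_minus[OF lim] by simp
  have l: "eventually (\<lambda>n. - y n \<le> - xs + e/2) sequentially"
    by (rule upper[OF cont' Hb' sign' yb' rec' lim']) (use e in simp)
  show "eventually (\<lambda>n. dist (y n) xs < e) sequentially"
    using u l
  proof eventually_elim
    case (elim n) then show ?case using e by (auto simp: dist_real_def abs_less_iff)
  qed
qed

lemma sign_from_unique:
  fixes Hf :: "real \<Rightarrow> real"
  assumes cont: "continuous_on UNIV Hf" and h1: "Hf 1 < 1" and hm1: "Hf (-1) > -1"
    and fx: "Hf xs = xs" and uniq: "\<forall>w\<in>{-1..1}. Hf w = w \<longrightarrow> w = xs"
  shows "\<forall>w\<in>{-1..1}. w > xs \<longrightarrow> Hf w < w" "\<forall>w\<in>{-1..1}. w < xs \<longrightarrow> Hf w > w"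
proof -
  have c: "continuous_on {a..b} (\<lambda>w. Hf w - w)" for a b
    by (intro continuous_intros continuous_on_subset[OF cont]) auto
  show "\<forall>w\<in>{-1..1}. w > xs \<longrightarrow> Hf w < w"
  proof (intro ballI impI)
    fix w :: real assume w: "w \<in> {-1..1}" "w > xs"
    show "Hf w < w"
    proof (rule ccontr)
      assume "\<not> Hf w < w"
      then have "Hf w - w \<ge> 0" by simp
      moreover have "Hf 1 - 1 \<le> 0" using h1 by simp
      ultimately obtain c where "w \<le> c" "c \<le> 1" "Hf c - c = 0"
        using IVT2'[of "\<lambda>w. Hf w - w" 1 0 w, OF _ _ _ c] w by auto
      then show False using uniq w by force
    qed
  qed
  show "\<forall>w\<in>{-1..1}. w < xs \<longrightarrow> Hf w > w"
  proof (intro ballI impI)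
    fix w :: real assume w: "w \<in> {-1..1}" "w < xs"
    show "Hf w > w"
    proof (rule ccontr)
      assume "\<not> Hf w > w"
      then have "Hf w - w \<le> 0" by simp
      moreover have "Hf (-1) - (-1) \<ge> 0" using hm1 by simp
      ultimately obtain c where "-1 \<le> c" "c \<le> w" "Hf c - c = 0"
        using IVT2'[of "\<lambda>w. Hf w - w" w 0 "-1", OF _ _ _ c] w by auto
      then show False using uniq w by force
    qed
  qed
qed

lemma Sx_abs: "(\<forall>i\<in>{1..n}. x i \<in> {-1,1}) \<Longrightarrow> \<bar>Sx x n\<bar> \<le> real n"
proof -
  assume h: "\<forall>i\<in>{1..n}. x i \<in> {-1,1}"
  have "\<bar>Sx x n\<bar> \<le> (\<Sum>i=1..n. \<bar>x i\<bar>)" unfolding Sx_def by (rule sum_abs)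
  also have "\<dots> = (\<Sum>i=1..n. 1)"
  proof (intro sum.cong refl)
    fix i assume "i \<in> {1..n}"
    then have "x i \<in> {-1,1}" using h by blast
    then show "\<bar>x i\<bar> = 1" by auto
  qed
  finally show ?thesis by simp
qed

lemma Sx_Suc: "Sx x (Suc n) = Sx x n + x (Suc n)"
  unfolding Sx_def by simp

lemma Mx_Suc: "n \<ge> 1 \<Longrightarrow> Mx p f k x (Suc n) = Mx p f k x n + (x (Suc n) - erw_H p f k (Sx x n / real n))"
  unfolding Mx_def by (simp add: sum.atLeastLessThan_Suc)

context erwp
begin

lemma y_bound: "(\<forall>i\<ge>1. x i \<in> {-1,1}) \<Longrightarrow> n \<ge> 1 \<Longrightarrow> Sx x n / real n \<in> {-1..1}"
proof -
  assume h: "\<forall>i\<ge>1. x i \<in> {-1,1}" and n: "n \<ge> 1"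
  have "\<bar>Sx x n\<bar> \<le> real n" using h by (intro Sx_abs) auto
  then show ?thesis using n by (auto simp: abs_le_iff field_simps)
qed

lemma Mx_diff:
  assumes h: "\<forall>i\<ge>1. x i \<in> {-1,1}" and m: "m \<ge> 1" and mn: "m \<le> n"
  shows "\<bar>Mx p f k x n - Mx p f k x m\<bar> \<le> 2 * (real n - real m)"
  using mn
proof (induction n rule: dec_induct)
  case base then show ?case by simp
next
  case (step n)
  have n1: "n \<ge> 1" using step(1) m by auto
  have "\<bar>erw_H p f k (Sx x n / real n)\<bar> \<le> 1" by (rule H_bound'[OF y_bound[OF h n1]])
  moreover have "x (Suc n) \<in> {-1,1}" using h[rule_format, of "Suc n"] by simp
  then have "\<bar>x (Suc n)\<bar> = 1" by auto
  ultimately have "\<bar>x (Suc n) - erw_H p f k (Sx x n / real n)\<bar> \<le> 2" by (auto simp: abs_le_iff)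
  then show ?case using step(3) unfolding Mx_Suc[OF n1] by (auto simp: abs_le_iff)
qed

lemma quart_exists: "n \<ge> 1 \<Longrightarrow> \<exists>j. (Suc j)^4 \<le> n \<and> n < (Suc (Suc j))^4"
proof (induction n rule: nat_induct_at_least)
  case base then show ?case by (intro exI[of _ 0]) (simp add: eval_nat_numeral)
next
  case (Suc n)
  then obtain j where j: "(Suc j)^4 \<le> n" "n < (Suc (Suc j))^4" by blast
  show ?case
  proof (cases "Suc n < (Suc (Suc j))^4")
    case True then show ?thesis using j by (intro exI[of _ j]) auto
  next
    case False
    then have "Suc n = (Suc (Suc j))^4" using j by simp
    moreover have "(Suc (Suc j))^4 < (Suc (Suc (Suc j)))^4" by (intro power_strict_mono) auto
    ultimately show ?thesis by (intro exI[of _ "Suc j"]) auto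
  qed
qed

lemma Mx_lim:
  assumes h: "\<forall>i\<ge>1. x i \<in> {-1,1}"
    and ev: "eventually (\<lambda>j. \<bar>Mx p f k x ((Suc j)^4)\<bar> \<le> real ((Suc j)^3)) sequentially"
  shows "(\<lambda>n. Mx p f k x n / real n) \<longlonglongrightarrow> 0"
proof (rule LIMSEQ_I)
  fix r :: real assume r: "r > 0"
  obtain J where J: "\<forall>j\<ge>J. \<bar>Mx p f k x ((Suc j)^4)\<bar> \<le> real ((Suc j)^3)"
    using ev unfolding eventually_sequentially by blast
  define J' where "J' = max J (nat \<lceil>31 / r\<rceil>)"
  have J'r: "31 / real (Suc J') < r"
  proof -
    have "31 / r \<le> real J'" unfolding J'_def by linarith
    then have "31 / r < real (Suc J')" by simp
    then have "31 < r * real (Suc J')" using r by (simp add: field_simps)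
    then show ?thesis by (simp add: field_simps)
  qed
  show "\<exists>no. \<forall>n\<ge>no. norm (Mx p f k x n / real n - 0) < r"
  proof (intro exI[of _ "(Suc J')^4"] allI impI)
    fix n assume n: "n \<ge> (Suc J')^4"
    have "1 \<le> (Suc J')^4" by (rule one_le_power) simp
    then have n1: "n \<ge> 1" using n by linarith
    obtain j where j: "(Suc j)^4 \<le> n" "n < (Suc (Suc j))^4" using quart_exists[OF n1] by blast
    have jJ: "j \<ge> J'"
    proof (rule ccontr)
      assume "\<not> j \<ge> J'"
      then have "Suc (Suc j) \<le> Suc J'" by simp
      then have "(Suc (Suc j))^4 \<le> (Suc J')^4" by (rule power_mono) simp
      then show False using j n by linarith
    qed
    define A where "A = real (Suc j)"
    have A1: "A \<ge> 1" unfolding A_def by simp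
    have "real ((Suc j)^4) \<le> real n" using j(1) by (simp only: of_nat_le_iff)
    then have nA1: "A^4 \<le> real n" unfolding A_def by simp
    have "real n < real ((Suc (Suc j))^4)" using j(2) by (simp only: of_nat_less_iff)
    then have nA2: "real n < (A+1)^4" unfolding A_def by simp
    have b1: "\<bar>Mx p f k x ((Suc j)^4)\<bar> \<le> A^3" using J jJ unfolding J'_def A_def by auto
    have b2: "\<bar>Mx p f k x n - Mx p f k x ((Suc j)^4)\<bar> \<le> 2 * (real n - A^4)"
      using Mx_diff[OF h _ j(1)] unfolding A_def by simp
    have e4: "(A+1)^4 = A^4 + 4*A^3 + 6*A^2 + 4*A + 1" by algebra
    have p3: "A^2 \<le> A^3" "A^1 \<le> A^3" "1 \<le> A^3"
      using power_increasing[of 2 3 A] power_increasing[of 1 3 A] one_le_power[of A 3] A1 by auto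
    have b1': "Mx p f k x ((Suc j)^4) \<le> A^3" "- Mx p f k x ((Suc j)^4) \<le> A^3"
      using b1 unfolding abs_le_iff by auto
    have b2': "Mx p f k x n - Mx p f k x ((Suc j)^4) \<le> 2 * (real n - A^4)"
       "- (Mx p f k x n - Mx p f k x ((Suc j)^4)) \<le> 2 * (real n - A^4)"
      using b2 unfolding abs_le_iff by auto
    have p3': "A \<le> A^3" using p3(2) by simp
    have nA3: "real n < A^4 + 4*A^3 + 6*A^2 + 4*A + 1" using nA2 unfolding e4 .
    have "Mx p f k x n \<le> 31 * A^3"
      using b1'(1) b2'(1) nA3 p3(1,3) p3' by argo
    moreover have "- Mx p f k x n \<le> 31 * A^3"
      using b1'(2) b2'(2) nA3 p3(1,3) p3' by argo
    ultimately have "Mx p f k x n \<le> 31 * A^3 \<and> - Mx p f k x n \<le> 31 * A^3" by blast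
    then have "\<bar>Mx p f k x n\<bar> \<le> 31 * A^3" by (simp only: abs_le_iff)
    moreover have "A^4 > 0" using A1 by simp
    ultimately have "\<bar>Mx p f k x n\<bar> / real n \<le> 31 * A^3 / A^4"
      using nA1 A1 by (intro frac_le) auto
    also have "A^4 = A^3 * A" by algebra
    also have "31 * A^3 / (A^3 * A) = 31 / A" using A1 by simp
    also have "\<dots> \<le> 31 / real (Suc J')" unfolding A_def using jJ by (intro divide_left_mono) auto
    finally show "norm (Mx p f k x n / real n - 0) < r" using J'r by simp
  qed
qed

lemma H_ends: "erw_H p f k 1 < 1" "erw_H p f k (-1) > -1"
proof -
  have "erw_g p f 1 < 1" "erw_g p f 0 > 0" using g_bounds[OF p0 p1] fb by auto
  then show "erw_H p f k 1 < 1" "erw_H p f k (-1) > -1" using H_one[OF k1] H_mone by auto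
qed

lemma H_contU: "continuous_on UNIV (erw_H p f k)" by (rule H_cont)

end

context erw
begin

lemma conv_main:
  assumes xs: "xs \<in> {-1..1}" and fx: "erw_H p f k xs = xs"
    and uniq: "\<forall>y\<in>{-1..1}. erw_H p f k y = y \<longrightarrow> y = xs"
  shows "AE \<omega> in M. (\<lambda>n. erw_S X n \<omega> / real n) \<longlonglongrightarrow> xs"
  using main_AE
proof eventually_elim
  case (elim \<omega>)
  define x where "x = (\<lambda>m. X m \<omega>)"
  have h: "\<forall>i\<ge>1. x i \<in> {-1,1}" using elim unfolding x_def by auto
  have ev: "eventually (\<lambda>j. \<bar>Mx p f k x ((Suc j)^4)\<bar> \<le> real ((Suc j)^3)) sequentially"
    using elim unfolding x_def by auto
  define y where "y n = Sx x n / real n" for n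
  define z where "z n = y n - Mx p f k x n / real n" for n
  note sg = sign_from_unique[OF H_contU H_ends(1) H_ends(2) fx uniq]
  have yb: "\<forall>n\<ge>1. y n \<in> {-1..1}" unfolding y_def using y_bound[OF h] by auto
  have rec: "\<forall>n\<ge>1. z (Suc n) = (real n * z n + erw_H p f k (y n)) / real (Suc n)"
  proof (intro allI impI)
    fix n :: nat assume n: "n \<ge> 1"
    have nz: "real n * z n = Sx x n - Mx p f k x n" unfolding z_def y_def using n by (simp add: field_simps)
    have zS: "z (Suc n) = (Sx x (Suc n) - Mx p f k x (Suc n)) / real (Suc n)"
      unfolding z_def y_def by (simp add: diff_divide_distrib)
    have "Sx x (Suc n) - Mx p f k x (Suc n) = real n * z n + erw_H p f k (y n)"
      unfolding nz Sx_Suc Mx_Suc[OF n] y_def by simp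
    then show "z (Suc n) = (real n * z n + erw_H p f k (y n)) / real (Suc n)"
      unfolding zS by simp
  qed
  have lim: "(\<lambda>n. y n - z n) \<longlonglongrightarrow> 0" unfolding z_def using Mx_lim[OF h ev] by simp
  have "y \<longlonglongrightarrow> xs"
    by (rule conv[OF H_contU _ sg(1) sg(2) yb rec lim]) (use H_bound' in auto)
  moreover have "y = (\<lambda>n. erw_S X n \<omega> / real n)"
    unfolding y_def x_def Sx_def erw_S_def by simp
  ultimately show ?case by simp
qed

end

lemma near_neg:
  fixes g :: "real \<Rightarrow> real"
  assumes "continuous_on UNIV g" "g x0 < 0"
  shows "\<exists>d>0. \<forall>w. \<bar>w - x0\<bar> < d \<longrightarrow> g w < 0"
proof -
  have "isCont g x0" using assms(1) continuous_on_eq_continuous_at[of UNIV g] by simp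
  then have "(g \<longlongrightarrow> g x0) (at x0)" by (simp add: isCont_def)
  then have "eventually (\<lambda>w. g w < 0) (at x0)" using assms(2) by (rule order_tendstoD(2))
  then obtain d where d: "d > 0" "\<forall>w. w \<noteq> x0 \<and> dist w x0 < d \<longrightarrow> g w < 0"
    unfolding eventually_at by blast
  show ?thesis using d assms(2) by (intro exI[of _ d]) (auto simp: dist_real_def)
qed

context erwp
begin

lemma fixed_interior: "y \<in> {-1..1} \<Longrightarrow> erw_H p f k y = y \<Longrightarrow> y \<in> {-1<..<1}"
  using H_ends by (cases "y = 1"; cases "y = -1") auto

lemma hcont: "continuous_on UNIV (\<lambda>w. erw_H p f k w - w)"
  by (intro continuous_intros H_contU)

lemma exists_fixed: "\<exists>c\<in>{-1..1}. erw_H p f k c = c"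
proof -
  have "\<exists>x. -1 \<le> x \<and> x \<le> 1 \<and> (\<lambda>w. erw_H p f k w - w) x = 0"
    by (rule IVT2') (use H_ends in \<open>auto intro: continuous_on_subset[OF hcont]\<close>)
  then show ?thesis by auto
qed

lemma no_two_fixed:
  assumes a: "a \<in> {-1<..<1}" and b: "b \<in> {-1<..<1}" and ab: "a < b"
    and fa: "erw_H p f k a = a" and fb': "erw_H p f k b = b"
    and B: "(\<forall>x \<in> {-1<..<1}. \<forall>y \<in> {-1<..<1}. x < y \<longrightarrow> erw_H p f k y < erw_H p f k x)
        \<or> strictly_convex_on {-1<..<1} (erw_H p f k)
        \<or> strictly_concave_on {-1<..<1} (erw_H p f k)
        \<or> (\<exists>c. 0 \<le> c \<and> c < 1 \<and> (\<forall>x \<in> {-1<..<1}. \<forall>y \<in> {-1<..<1}.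
              \<bar>erw_H p f k x - erw_H p f k y\<bar> \<le> c * \<bar>x - y\<bar>))"
  shows False
  using B
proof (elim disjE)
  assume "\<forall>x \<in> {-1<..<1}. \<forall>y \<in> {-1<..<1}. x < y \<longrightarrow> erw_H p f k y < erw_H p f k x"
  then have "erw_H p f k b < erw_H p f k a" using a b ab by blast
  then show False using fa fb' ab by simp
next
  assume "\<exists>c. 0 \<le> c \<and> c < 1 \<and> (\<forall>x \<in> {-1<..<1}. \<forall>y \<in> {-1<..<1}.
              \<bar>erw_H p f k x - erw_H p f k y\<bar> \<le> c * \<bar>x - y\<bar>)"
  then obtain c where c: "c < 1" "\<bar>erw_H p f k a - erw_H p f k b\<bar> \<le> c * \<bar>a - b\<bar>" using a b by blast
  then have "\<bar>a - b\<bar> \<le> c * \<bar>a - b\<bar>" using fa fb' by simp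
  moreover have "\<bar>a - b\<bar> > 0" using ab by simp
  ultimately show False using c(1) by (smt (verit, best) mult_less_cancel_right2)
next
  assume cv: "strictly_convex_on {-1<..<1} (erw_H p f k)"
  have "erw_H p f k 1 - 1 < 0" using H_ends by simp
  then obtain d0 where d0: "d0 > 0" "\<forall>w. \<bar>w - 1\<bar> < d0 \<longrightarrow> erw_H p f k w - w < 0"
    using near_neg[OF hcont] by blast
  define d where "d = 1 - min d0 (1 - b) / 2"
  have m: "0 < min d0 (1-b)" "min d0 (1-b) \<le> 1 - b" "min d0 (1-b) \<le> d0" using d0 b by auto
  have d1: "b < d" using m unfolding d_def by argo
  have d2: "d < 1" using m unfolding d_def by argo
  note d12 = d1 d2
  have "\<bar>d - 1\<bar> = min d0 (1-b) / 2" unfolding d_def using m by simp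
  then have "\<bar>d - 1\<bar> < d0" using m by argo
  then have d: "b < d" "d < 1" "erw_H p f k d < d" using d12 d0 by auto
  define t where "t = (b - a) / (d - a)"
  have t: "0 < t" "t < 1" using ab d unfolding t_def by (auto simp: field_simps)
  have ne: "d - a \<noteq> 0" using ab d by simp
  have "t * (d - a) = b - a" unfolding t_def using ne by simp
  moreover have "(1 - t) * a + t * d = a + t * (d - a)" by algebra
  ultimately have bt: "(1 - t) * a + t * d = b" by simp
  have "erw_H p f k ((1 - t) * a + t * d) < (1 - t) * erw_H p f k a + t * erw_H p f k d"
    using cv a b d t ab unfolding strictly_convex_on_def by auto
  also have "\<dots> < (1 - t) * a + t * d" using fa d(3) t by simp
  finally show False using bt fb' by simp
next
  assume cc: "strictly_concave_on {-1<..<1} (erw_H p f k)"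
  have neg1: "- (erw_H p f k (-1) - (-1)) < 0" using H_ends by simp
  have hc2: "continuous_on UNIV (\<lambda>w. - (erw_H p f k w - w))" by (intro continuous_intros H_contU)
  obtain d0 where d0: "d0 > 0" "\<forall>w. \<bar>w - (-1)\<bar> < d0 \<longrightarrow> - (erw_H p f k w - w) < 0"
    using near_neg[OF hc2 neg1] by blast
  define d where "d = -1 + min d0 (a + 1) / 2"
  have m: "0 < min d0 (a+1)" "min d0 (a+1) \<le> a + 1" "min d0 (a+1) \<le> d0" using d0 a by auto
  have d1: "-1 < d" using m unfolding d_def by argo
  have d2: "d < a" using m unfolding d_def by argo
  note d12 = d1 d2
  have "\<bar>d - (-1)\<bar> = min d0 (a+1) / 2" unfolding d_def using m by simp
  then have "\<bar>d - (-1)\<bar> < d0" using m by argo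
  then have d: "-1 < d" "d < a" "erw_H p f k d > d" using d12 d0 by auto
  define t where "t = (a - d) / (b - d)"
  have t: "0 < t" "t < 1" using ab d unfolding t_def by (auto simp: field_simps)
  have ne: "b - d \<noteq> 0" using ab d by simp
  have "t * (b - d) = a - d" unfolding t_def using ne by simp
  moreover have "(1 - t) * d + t * b = d + t * (b - d)" by algebra
  ultimately have at: "(1 - t) * d + t * b = a" by simp
  have "- erw_H p f k ((1 - t) * d + t * b) < (1 - t) * (- erw_H p f k d) + t * (- erw_H p f k b)"
    using cc a b d t ab unfolding strictly_concave_on_def strictly_convex_on_def by auto
  also have "\<dots> < (1 - t) * (- d) + t * (- b)" using fb' d(3) t by simp
  finally show False using at fa by simp
qed

end

theorem theorem4p1:
  fixes M :: "'a measure" and q p :: real and k :: nat and f :: "real \<Rightarrow> real"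
    and X :: "nat \<Rightarrow> 'a \<Rightarrow> real" and U :: "nat \<Rightarrow> nat \<Rightarrow> 'a \<Rightarrow> nat"
  assumes "prob_space M"
    and "0 \<le> q" "q \<le> 1"
    and "0 < p" "p < 1" "p \<noteq> 1 / 2"
    and "k \<ge> 1"
    and "\<forall>x \<in> {0..1}. f x \<in> {0..1}"
    and "erw_process M q p f k X U"
    and A: "(p > 1 / 2 \<and> f 1 < p / (2 * p - 1)) \<or> (p < 1 / 2 \<and> f 0 < (1 - p) / (1 - 2 * p))"
  shows "(\<forall>xs. xs \<in> {-1..1} \<and> erw_H p f k xs = xs \<and>
              (\<forall>y \<in> {-1..1}. erw_H p f k y = y \<longrightarrow> y = xs) \<longrightarrow>
            (AE \<omega> in M. (\<lambda>n. erw_S X n \<omega> / real n) \<longlonglongrightarrow> xs))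
    \<and> ((\<forall>x \<in> {-1<..<1}. \<forall>y \<in> {-1<..<1}. x < y \<longrightarrow> erw_H p f k y < erw_H p f k x)
        \<or> strictly_convex_on {-1<..<1} (erw_H p f k)
        \<or> strictly_concave_on {-1<..<1} (erw_H p f k)
        \<or> (\<exists>c. 0 \<le> c \<and> c < 1 \<and> (\<forall>x \<in> {-1<..<1}. \<forall>y \<in> {-1<..<1}.
              \<bar>erw_H p f k x - erw_H p f k y\<bar> \<le> c * \<bar>x - y\<bar>))
       \<longrightarrow> (\<exists>xs \<in> {-1<..<1}. erw_H p f k xs = xs \<and>
              (\<forall>y \<in> {-1..1}. erw_H p f k y = y \<longrightarrow> y = xs) \<and>
              (AE \<omega> in M. (\<lambda>n. erw_S X n \<omega> / real n) \<longlonglongrightarrow> xs)))"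
proof -
  have ep: "erw q p f k M X U"
    unfolding erw_def erw_axioms_def erwp_def using assms(1-5,7-9) by auto
  interpret E: erw q p f k M X U by (rule ep)
  have part1: "\<forall>xs. xs \<in> {-1..1} \<and> erw_H p f k xs = xs \<and>
              (\<forall>y \<in> {-1..1}. erw_H p f k y = y \<longrightarrow> y = xs) \<longrightarrow>
            (AE \<omega> in M. (\<lambda>n. erw_S X n \<omega> / real n) \<longlonglongrightarrow> xs)"
    using E.conv_main by blast
  have part2: "(\<exists>xs \<in> {-1<..<1}. erw_H p f k xs = xs \<and>
              (\<forall>y \<in> {-1..1}. erw_H p f k y = y \<longrightarrow> y = xs) \<and>
              (AE \<omega> in M. (\<lambda>n. erw_S X n \<omega> / real n) \<longlonglongrightarrow> xs))"
    if B: "(\<forall>x \<in> {-1<..<1}. \<forall>y \<in> {-1<..<1}. x < y \<longrightarrow> erw_H p f k y < erw_H p f k x)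
        \<or> strictly_convex_on {-1<..<1} (erw_H p f k)
        \<or> strictly_concave_on {-1<..<1} (erw_H p f k)
        \<or> (\<exists>c. 0 \<le> c \<and> c < 1 \<and> (\<forall>x \<in> {-1<..<1}. \<forall>y \<in> {-1<..<1}.
              \<bar>erw_H p f k x - erw_H p f k y\<bar> \<le> c * \<bar>x - y\<bar>))"
  proof -
    obtain c where c: "c \<in> {-1..1}" "erw_H p f k c = c" using E.exists_fixed by blast
    have ci: "c \<in> {-1<..<1}" by (rule E.fixed_interior[OF c])
    have uniq: "\<forall>y \<in> {-1..1}. erw_H p f k y = y \<longrightarrow> y = c"
    proof (intro ballI impI)
      fix y assume y: "y \<in> {-1..1}" "erw_H p f k y = y"
      have yi: "y \<in> {-1<..<1}" by (rule E.fixed_interior[OF y])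
      show "y = c"
      proof (rule linorder_cases[of y c])
        assume "y < c" then show ?thesis using E.no_two_fixed[OF yi ci _ y(2) c(2) B] by blast
      next
        assume "c < y" then show ?thesis using E.no_two_fixed[OF ci yi _ c(2) y(2) B] by blast
      qed
    qed
    show ?thesis using ci c(2) uniq E.conv_main[OF c uniq] by blast
  qed
  show ?thesis using part1 part2 by blast
qed

end
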